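(* Let $\mu\in\mathbb{R}$, let $V\equiv c$ be a real constant, and let $\Gamma(x)=\Gamma_{+}\,\chi_{[0,\infty)}(x)+\Gamma_{-}\,\chi_{(-\infty,0)}(x)$ with $\Gamma_\pm\in\mathbb{R}$ and $\Gamma_+\neq\Gamma_-$. Then the equation $$\phi''(x)+\mu\phi(x)-V(x)\phi(x)+\Gamma(x)|\phi(x)|^2\phi(x)=0,\qquad x\in\mathbb{R},$$ has no nontrivial (complex-valued) solution $\phi\in H^1(\mathbb{R})$.
   Context: $\chi_I$ denotes the indicator function of the set $I$. Solutions are understood in the weak sense (such solutions are $C^1$ on $\mathbb{R}$). *)

theory Defs
  imports "HOL-Analysis.Analysis"
begin

definition test_fun :: "(real \<Rightarrow> real) \<Rightarrow> bool" where
  "test_fun \<psi> \<longleftrightarrow> (\<forall>k x. ((deriv ^^ k) \<psi>) differentiable (at x))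
                     \<and> bounded {x. \<psi> x \<noteq> 0}"

definition L2 :: "(real \<Rightarrow> complex) \<Rightarrow> bool" where
  "L2 f \<longleftrightarrow> f \<in> borel_measurable lborel \<and> integrable lborel (\<lambda>x. (norm (f x))\<^sup>2)"

definition weak_deriv :: "(real \<Rightarrow> complex) \<Rightarrow> (real \<Rightarrow> complex) \<Rightarrow> bool" where
  "weak_deriv f g \<longleftrightarrow> (\<forall>\<psi>. test_fun \<psi> \<longrightarrow>
      integrable lborel (\<lambda>x. f x * complex_of_real (deriv \<psi> x)) \<and>
      integrable lborel (\<lambda>x. g x * complex_of_real (\<psi> x)) \<and>
      integral\<^sup>L lborel (\<lambda>x. f x * complex_of_real (deriv \<psi> x))
        = - integral\<^sup>L lborel (\<lambda>x. g x * complex_of_real (\<psi> x)))"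

definition H1 :: "(real \<Rightarrow> complex) \<Rightarrow> bool" where
  "H1 f \<longleftrightarrow> L2 f \<and> (\<exists>g. L2 g \<and> weak_deriv f g)"

definition weak_solution ::
  "real \<Rightarrow> (real \<Rightarrow> real) \<Rightarrow> (real \<Rightarrow> real) \<Rightarrow> (real \<Rightarrow> complex) \<Rightarrow> bool" where
  "weak_solution \<mu> V \<Gamma> \<phi> \<longleftrightarrow> (\<forall>\<psi>. test_fun \<psi> \<longrightarrow>
      integrable lborel (\<lambda>x. \<phi> x * complex_of_real (deriv (deriv \<psi>) x)
          + complex_of_real (\<mu> - V x + \<Gamma> x * (norm (\<phi> x))\<^sup>2) * \<phi> x * complex_of_real (\<psi> x)) \<and>
      integral\<^sup>L lborel (\<lambda>x. \<phi> x * complex_of_real (deriv (deriv \<psi>) x)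
          + complex_of_real (\<mu> - V x + \<Gamma> x * (norm (\<phi> x))\<^sup>2) * \<phi> x * complex_of_real (\<psi> x)) = 0)"

definition step_coeff :: "real \<Rightarrow> real \<Rightarrow> real \<Rightarrow> real" where
  "step_coeff Gp Gm x = (if x \<ge> 0 then Gp else Gm)"

end

theory Submission
  imports Defs "HOL-Computational_Algebra.Polynomial"
begin

fun smooth :: "nat \<Rightarrow> (real \<Rightarrow> real) \<Rightarrow> bool" where
  "smooth 0 f = True"
| "smooth (Suc n) f = ((\<forall>x. f differentiable (at x)) \<and> smooth n (deriv f))"

lemma smooth_iff: "smooth n f \<longleftrightarrow> (\<forall>k<n. \<forall>x. (deriv ^^ k) f differentiable (at x))"
proof (induction n arbitrary: f)
  case 0 then show ?case by simp
next
  case (Suc n)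
  have "(\<forall>k<Suc n. \<forall>x. (deriv ^^ k) f differentiable (at x)) \<longleftrightarrow>
        (\<forall>x. f differentiable (at x)) \<and> (\<forall>k<n. \<forall>x. (deriv ^^ Suc k) f differentiable (at x))"
    by (auto simp: less_Suc_eq_0_disj)
  also have "\<dots> \<longleftrightarrow> (\<forall>x. f differentiable (at x)) \<and> (\<forall>k<n. \<forall>x. (deriv ^^ k) (deriv f) differentiable (at x))"
    by (simp only: funpow_Suc_right o_apply)
  finally show ?case using Suc by simp
qed

lemma test_fun_iff: "test_fun \<psi> \<longleftrightarrow> (\<forall>n. smooth n \<psi>) \<and> bounded {x. \<psi> x \<noteq> 0}"
  unfolding test_fun_def smooth_iff by blast

lemma smooth_Suc_D: "smooth (Suc n) f \<Longrightarrow> smooth n f"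
  by (induction n arbitrary: f) auto

lemma smooth_le: "smooth n f \<Longrightarrow> m \<le> n \<Longrightarrow> smooth m f"
  by (auto simp: smooth_iff)

lemma deriv_eqI: "(\<And>x. (f has_real_derivative f' x) (at x)) \<Longrightarrow> deriv f = f'"
  by (rule ext) (rule DERIV_imp_deriv)

lemma smooth_const: "smooth n (\<lambda>x. c)"
proof (induction n arbitrary: c)
  case (Suc n)
  have "deriv (\<lambda>x. c) = (\<lambda>x. 0)" by (rule deriv_eqI) auto
  then show ?case using Suc by simp
qed simp

lemma smooth_add:
  "smooth n f \<Longrightarrow> smooth n g \<Longrightarrow> smooth n (\<lambda>x. f x + g x)"
proof (induction n arbitrary: f g)
  case (Suc n)
  then have df: "\<And>x. (f has_real_derivative deriv f x) (at x)" and dg: "\<And>x. (g has_real_derivative deriv g x) (at x)"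
    by (auto simp: DERIV_deriv_iff_real_differentiable)
  have "deriv (\<lambda>x. f x + g x) = (\<lambda>x. deriv f x + deriv g x)"
    by (rule deriv_eqI) (auto intro!: derivative_eq_intros df dg)
  moreover have "\<forall>x. (\<lambda>x. f x + g x) differentiable (at x)"
    using df dg by (auto intro!: derivative_eq_intros simp: real_differentiable_def)
  ultimately show ?case using Suc by simp
qed simp

lemma smooth_mult:
  "smooth n f \<Longrightarrow> smooth n g \<Longrightarrow> smooth n (\<lambda>x. f x * g x)"
proof (induction n arbitrary: f g)
  case (Suc n)
  then have df: "\<And>x. (f has_real_derivative deriv f x) (at x)" and dg: "\<And>x. (g has_real_derivative deriv g x) (at x)"
    by (auto simp: DERIV_deriv_iff_real_differentiable)
  have "deriv (\<lambda>x. f x * g x) = (\<lambda>x. deriv f x * g x + f x * deriv g x)"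
    by (rule deriv_eqI) (auto intro!: derivative_eq_intros df dg)
  moreover have "\<forall>x. (\<lambda>x. f x * g x) differentiable (at x)"
    using df dg by (auto intro!: derivative_eq_intros simp: real_differentiable_def)
  moreover have "smooth n f" "smooth n g" using smooth_Suc_D Suc.prems by blast+
  then have "smooth n (\<lambda>x. deriv f x * g x + f x * deriv g x)"
    using Suc by (intro smooth_add Suc.IH) auto
  ultimately show ?case by simp
qed simp

lemma smooth_affine:
  "smooth n f \<Longrightarrow> smooth n (\<lambda>x. f (a * x + b))"
proof (induction n arbitrary: f)
  case (Suc n)
  then have df: "\<And>x. (f has_real_derivative deriv f x) (at x)"
    by (auto simp: DERIV_deriv_iff_real_differentiable)
  have d: "\<And>x. ((\<lambda>x. f (a * x + b)) has_real_derivative a * deriv f (a * x + b)) (at x)"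
  proof -
    fix x
    have "((\<lambda>x. a * x + b) has_real_derivative a) (at x)" by (auto intro!: derivative_eq_intros)
    from DERIV_chain2[OF df this] show "?thesis x" by (simp add: mult.commute)
  qed
  have "deriv (\<lambda>x. f (a * x + b)) = (\<lambda>x. a * deriv f (a * x + b))"
    by (rule deriv_eqI) (rule d)
  moreover have "smooth n (\<lambda>x. a * deriv f (a * x + b))"
    using Suc by (intro smooth_mult smooth_const) auto
  ultimately show ?case using d by (auto simp: real_differentiable_def)
qed simp

lemma smooth_inverse:
  assumes "\<And>x. g x \<noteq> 0"
  shows "smooth n g \<Longrightarrow> smooth n (\<lambda>x. inverse (g x))"
proof (induction n)
  case (Suc n)
  then have dg: "\<And>x. (g has_real_derivative deriv g x) (at x)"
    by (auto simp: DERIV_deriv_iff_real_differentiable)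
  have d: "\<And>x. ((\<lambda>x. inverse (g x)) has_real_derivative - (deriv g x * (inverse (g x) * inverse (g x)))) (at x)"
    using assms by (auto intro!: derivative_eq_intros dg simp: power2_eq_square field_simps)
  have "deriv (\<lambda>x. inverse (g x)) = (\<lambda>x. - (deriv g x * (inverse (g x) * inverse (g x))))"
    by (rule deriv_eqI) (rule d)
  moreover have "smooth n (\<lambda>x. - (deriv g x * (inverse (g x) * inverse (g x))))"
  proof -
    have "smooth n g" using smooth_Suc_D Suc.prems by blast
    then have "smooth n (\<lambda>x. (-1) * (deriv g x * (inverse (g x) * inverse (g x))))"
      using Suc by (intro smooth_mult smooth_const) auto
    then show ?thesis by simp
  qed
  ultimately show ?case using d by (auto simp: real_differentiable_def)
qed simp

lemma smooth_antideriv: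
  assumes "\<And>x. (F has_real_derivative f x) (at x)" "smooth n f"
  shows "smooth (Suc n) F"
proof -
  have "deriv F = f" by (rule deriv_eqI) (rule assms)
  then show ?thesis using assms by (auto simp: real_differentiable_def)
qed

lemma smooth_deriv: "smooth (Suc n) f \<Longrightarrow> smooth n (deriv f)"
  by simp


definition Pe :: "real poly \<Rightarrow> real \<Rightarrow> real" where
  "Pe p x = (if x > 0 then poly p (inverse x) * exp (- inverse x) else 0)"

lemma poly_exp_tendsto: fixes p :: "real poly" shows "((\<lambda>y. poly p y * exp (- y)) \<longlongrightarrow> 0) at_top"
proof -
  have "((\<lambda>y::real. \<Sum>i\<le>degree p. coeff p i * (y ^ i / exp y)) \<longlongrightarrow> 0) at_top"
    by (intro tendsto_null_sum tendsto_mult_right_zero tendsto_power_div_exp_0)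
  moreover have "(\<lambda>y. \<Sum>i\<le>degree p. coeff p i * (y ^ i / exp y)) = (\<lambda>y. poly p y * exp (- y))"
    by (auto simp: poly_altdef sum_distrib_right exp_minus divide_inverse mult.assoc)
  ultimately show ?thesis by simp
qed

lemma Pe_deriv_pos:
  assumes "x > 0"
  shows "(Pe p has_real_derivative Pe ([:0,0,1:] * (p - pderiv p)) x) (at x)"
proof -
  have d: "((\<lambda>x. poly p (inverse x) * exp (- inverse x)) has_real_derivative
      poly (pderiv p) (inverse x) * (- (inverse x * inverse x)) * exp (- inverse x)
      + poly p (inverse x) * (exp (- inverse x) * (inverse x * inverse x))) (at x)"
    using assms
    by (auto intro!: derivative_eq_intros DERIV_chain2[OF poly_DERIV] simp: power2_eq_square field_simps)
  have "poly (pderiv p) (inverse x) * (- (inverse x * inverse x)) * exp (- inverse x)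
      + poly p (inverse x) * (exp (- inverse x) * (inverse x * inverse x))
      = Pe ([:0,0,1:] * (p - pderiv p)) x"
    using assms by (simp add: Pe_def algebra_simps)
  with d have d2: "((\<lambda>x. poly p (inverse x) * exp (- inverse x)) has_real_derivative
      Pe ([:0,0,1:] * (p - pderiv p)) x) (at x)" by simp
  show ?thesis
  proof (rule has_field_derivative_transform_within_open[OF d2, of "{0<..}"])
    show "\<And>z. z \<in> {0<..} \<Longrightarrow> poly p (inverse z) * exp (- inverse z) = Pe p z"
      by (simp add: Pe_def)
  qed (use assms in auto)
qed

lemma Pe_deriv_neg:
  assumes "x < 0"
  shows "(Pe p has_real_derivative 0) (at x)"
proof -
  have d2: "((\<lambda>x. 0) has_real_derivative 0) (at x)" by simp
  show ?thesis
  proof (rule has_field_derivative_transform_within_open[OF d2, of "{..<0}"])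
    show "\<And>z. z \<in> {..<0} \<Longrightarrow> 0 = Pe p z"
      by (simp add: Pe_def)
  qed (use assms in auto)
qed

lemma Pe_deriv_zero:
  shows "(Pe p has_real_derivative 0) (at 0)"
proof -
  have r: "((\<lambda>h. (Pe p (0 + h) - Pe p 0) / h) \<longlongrightarrow> 0) (at_right 0)"
  proof -
    have lim: "((\<lambda>h. poly ([:0,1:] * p) (inverse h) * exp (- inverse h)) \<longlongrightarrow> 0) (at_right 0)"
      by (rule filterlim_compose[OF poly_exp_tendsto filterlim_inverse_at_top_right])
    show ?thesis
    proof (rule Lim_transform_within[OF lim, of 1])
      fix h :: real assume "0 < dist h 0" "dist h 0 < 1" "h \<in> {0<..}"
      then show "poly ([:0,1:] * p) (inverse h) * exp (- inverse h) = (Pe p (0 + h) - Pe p 0) / h"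
        by (simp add: Pe_def field_simps)
    qed simp
  qed
  have l: "((\<lambda>h. (Pe p (0 + h) - Pe p 0) / h) \<longlongrightarrow> 0) (at_left 0)"
  proof (rule Lim_transform_within[OF tendsto_const, of 1])
    fix h :: real assume "0 < dist h 0" "dist h 0 < 1" "h \<in> {..<0}"
    then show "0 = (Pe p (0 + h) - Pe p 0) / h"
      by (simp add: Pe_def)
  qed simp
  from r l show ?thesis
    unfolding DERIV_def by (simp add: filterlim_split_at)
qed

lemma Pe_deriv: "(Pe p has_real_derivative Pe ([:0,0,1:] * (p - pderiv p)) x) (at x)"
proof -
  consider "x > 0" | "x < 0" | "x = 0" by linarith
  then show ?thesis
  proof cases
    case 1 then show ?thesis by (rule Pe_deriv_pos)
  next
    case 2 then show ?thesis using Pe_deriv_neg[of x p] by (simp add: Pe_def)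
  next
    case 3 then show ?thesis using Pe_deriv_zero[of p] by (simp add: Pe_def)
  qed
qed

lemma smooth_Pe: "smooth n (Pe p)"
proof (induction n arbitrary: p)
  case (Suc n)
  have "deriv (Pe p) = Pe ([:0,0,1:] * (p - pderiv p))"
    by (rule deriv_eqI) (rule Pe_deriv)
  then show ?case using Suc Pe_deriv by (auto simp: real_differentiable_def)
qed simp

definition ee :: "real \<Rightarrow> real" where "ee x = (if x > 0 then exp (- inverse x) else 0)"

lemma ee_Pe: "ee = Pe 1"
  by (auto simp: ee_def Pe_def)

lemma smooth_ee: "smooth n ee"
  by (simp add: ee_Pe smooth_Pe)

lemma ee_pos: "x > 0 \<Longrightarrow> ee x > 0" and ee_zero: "x \<le> 0 \<Longrightarrow> ee x = 0" and ee_nonneg: "ee x \<ge> 0"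
  by (auto simp: ee_def)

definition St :: "real \<Rightarrow> real" where "St x = ee x / (ee x + ee (1 - x))"

lemma St_den_pos: "ee x + ee (1 - x) > 0"
proof (cases "x > 0")
  case True then show ?thesis using ee_pos[of x] ee_nonneg[of "1-x"] by simp
next
  case False then show ?thesis using ee_pos[of "1-x"] ee_nonneg[of x] by simp
qed

lemma smooth_St: "smooth n St"
proof -
  have "smooth n (\<lambda>x. ee x * inverse (ee ((-1) * x + 1) + ee x))"
  proof (intro smooth_mult smooth_ee smooth_inverse smooth_add smooth_affine)
    fix x show "ee ((-1) * x + 1) + ee x \<noteq> 0" using St_den_pos[of x] by simp
  qed
  then show ?thesis unfolding St_def by (simp add: divide_inverse add.commute)
qed

lemma St_zero: "x \<le> 0 \<Longrightarrow> St x = 0" and St_one: "x \<ge> 1 \<Longrightarrow> St x = 1"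
  and St_nonneg: "St x \<ge> 0" and St_le1: "St x \<le> 1"
  using St_den_pos[of x] ee_nonneg[of x] ee_nonneg[of "1-x"]
  by (auto simp: St_def ee_zero)


lemma test_support:
  assumes "test_fun \<psi>"
  obtains R where "R > 0" "\<And>x. R < \<bar>x\<bar> \<Longrightarrow> \<psi> x = 0"
proof -
  from assms obtain a where a: "\<forall>x\<in>{x. \<psi> x \<noteq> 0}. \<bar>x\<bar> \<le> a"
    unfolding test_fun_def bounded_real by blast
  show ?thesis
  proof (rule that[of "\<bar>a\<bar> + 1"])
    fix x assume x: "\<bar>a\<bar> + 1 < \<bar>x\<bar>"
    show "\<psi> x = 0"
    proof (rule ccontr)
      assume "\<psi> x \<noteq> 0"
      then have "\<bar>x\<bar> \<le> a" using a by auto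
      then show False using x by linarith
    qed
  qed simp
qed

lemma test_DERIV: "test_fun \<psi> \<Longrightarrow> (\<psi> has_real_derivative deriv \<psi> x) (at x)"
  unfolding test_fun_def
  by (metis DERIV_deriv_iff_real_differentiable funpow_0)

lemma test_isCont: "test_fun \<psi> \<Longrightarrow> isCont \<psi> x"
  using test_DERIV DERIV_isCont by blast

lemma test_cont: "test_fun \<psi> \<Longrightarrow> continuous_on A \<psi>"
  by (simp add: continuous_at_imp_continuous_on test_isCont)

lemma deriv_zero_outside:
  fixes \<psi> :: "real \<Rightarrow> real"
  assumes "\<And>x. R < \<bar>x\<bar> \<Longrightarrow> \<psi> x = 0" "R < \<bar>x\<bar>"
  shows "deriv \<psi> x = 0"
proof -
  have "((\<lambda>_. 0) has_real_derivative 0) (at x)" by simp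
  then have "(\<psi> has_real_derivative 0) (at x)"
    by (rule has_field_derivative_transform_within_open[where S="{x. R < \<bar>x\<bar>}"])
       (use assms in \<open>auto intro!: open_Collect_less continuous_intros\<close>)
  then show ?thesis by (rule DERIV_imp_deriv)
qed

lemma test_fun_deriv: "test_fun \<psi> \<Longrightarrow> test_fun (deriv \<psi>)"
proof -
  assume t: "test_fun \<psi>"
  then obtain R where R: "R > 0" "\<And>x. R < \<bar>x\<bar> \<Longrightarrow> \<psi> x = 0" using test_support[OF t] by blast
  have "{x. deriv \<psi> x \<noteq> 0} \<subseteq> {-R..R}"
  proof
    fix x assume "x \<in> {x. deriv \<psi> x \<noteq> 0}"
    then have "\<not> R < \<bar>x\<bar>" using deriv_zero_outside[OF R(2)] by auto
    then show "x \<in> {-R..R}" by (auto simp: abs_if split: if_splits)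
  qed
  then have "bounded {x. deriv \<psi> x \<noteq> 0}"
    by (rule bounded_subset[OF bounded_closed_interval])
  moreover have "\<forall>n. smooth n (deriv \<psi>)"
    using t unfolding test_fun_iff by (metis smooth.simps(2))
  ultimately show ?thesis by (simp add: test_fun_iff)
qed

lemma test_fun_lincomb:
  assumes "test_fun \<psi>" "test_fun \<eta>"
  shows "test_fun (\<lambda>x. a * \<psi> x + b * \<eta> x)"
proof -
  have "{x. a * \<psi> x + b * \<eta> x \<noteq> 0} \<subseteq> {x. \<psi> x \<noteq> 0} \<union> {x. \<eta> x \<noteq> 0}" by auto
  then have "bounded {x. a * \<psi> x + b * \<eta> x \<noteq> 0}"
    using assms by (metis (no_types, lifting) bounded_Un bounded_subset test_fun_def)
  moreover have "smooth n (\<lambda>x. a * \<psi> x + b * \<eta> x)" for n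
    using assms by (auto simp: test_fun_iff intro!: smooth_add smooth_mult smooth_const)
  ultimately show ?thesis by (simp add: test_fun_iff)
qed



definition locint :: "(real \<Rightarrow> complex) \<Rightarrow> bool" where
  "locint f \<longleftrightarrow> f \<in> borel_measurable borel \<and> (\<forall>a b. set_integrable lborel {a..b} f)"

lemma integrable_compact_mult:
  fixes f :: "real \<Rightarrow> complex"
  assumes f: "locint f" and \<psi>: "continuous_on UNIV \<psi>" and R: "\<And>x. R < \<bar>x\<bar> \<Longrightarrow> \<psi> x = 0"
  shows "integrable lborel (\<lambda>x. f x * complex_of_real (\<psi> x))"
proof -
  have "compact (\<psi> ` {-R..R})"
    by (rule compact_continuous_image[OF continuous_on_subset[OF \<psi>]]) auto
  then obtain M where M: "\<And>x. x \<in> {-R..R} \<Longrightarrow> norm (\<psi> x) \<le> M"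
    using compact_imp_bounded bounded_iff by (metis image_eqI)
  have i: "integrable lborel (\<lambda>x. indicator {-R..R} x *\<^sub>R f x)"
    using f unfolding locint_def set_integrable_def by blast
  show ?thesis
  proof (rule Bochner_Integration.integrable_bound[OF integrable_scaleR_right[OF i, of M]])
    show "(\<lambda>x. f x * complex_of_real (\<psi> x)) \<in> borel_measurable lborel"
    proof -
      have [measurable]: "\<psi> \<in> borel_measurable borel" by (rule borel_measurable_continuous_onI[OF \<psi>])
      have [measurable]: "f \<in> borel_measurable borel" using f by (simp add: locint_def)
      show ?thesis by measurable
    qed
    show "AE x in lborel. norm (f x * complex_of_real (\<psi> x)) \<le> norm (M *\<^sub>R (indicator {-R..R} x *\<^sub>R f x))"
    proof (rule AE_I2)
      fix x
      show "norm (f x * complex_of_real (\<psi> x)) \<le> norm (M *\<^sub>R (indicator {-R..R} x *\<^sub>R f x))"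
      proof (cases "x \<in> {-R..R}")
        case True
        then have "\<bar>\<psi> x\<bar> \<le> M" using M by auto
        then have "cmod (f x) * \<bar>\<psi> x\<bar> \<le> cmod (f x) * \<bar>M\<bar>" by (intro mult_left_mono) auto
        then show ?thesis using True by (simp add: norm_mult mult.commute)
      next
        case False
        then have "R < \<bar>x\<bar>" by (auto simp: abs_if)
        then show ?thesis using R[of x] by simp
      qed
    qed
  qed
qed

lemma integrable_test_mult:
  "locint f \<Longrightarrow> test_fun \<psi> \<Longrightarrow> integrable lborel (\<lambda>x. f x * complex_of_real (\<psi> x))"
  by (metis integrable_compact_mult test_cont test_support)

lemma cont_locint:
  fixes f :: "real \<Rightarrow> complex"
  assumes "continuous_on UNIV f" shows "locint f"
  unfolding locint_def using assms
  by (auto intro!: borel_measurable_continuous_onI borel_integrable_atLeastAtMost' intro: continuous_on_subset)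

lemma L2_locint:
  assumes "L2 f" shows "locint f"
  unfolding locint_def
proof (intro conjI allI)
  show fm: "f \<in> borel_measurable borel" using assms by (simp add: L2_def)
  fix a b :: real
  have i1: "integrable lborel (\<lambda>x. indicator {a..b} x *\<^sub>R (1::real))"
    using borel_integrable_atLeastAtMost'[of a b "\<lambda>_. 1::real"] by (simp add: set_integrable_def)
  have i2: "integrable lborel (\<lambda>x. indicator {a..b} x *\<^sub>R (norm (f x))\<^sup>2)"
    using assms unfolding L2_def by (intro integrable_mult_indicator) auto
  show "set_integrable lborel {a..b} f"
    unfolding set_integrable_def
  proof (rule Bochner_Integration.integrable_bound[OF Bochner_Integration.integrable_add[OF i1 i2]])
    show "(\<lambda>x. indicat_real {a..b} x *\<^sub>R f x) \<in> borel_measurable lborel" using fm by simp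
    show "AE x in lborel. norm (indicat_real {a..b} x *\<^sub>R f x)
         \<le> norm (indicat_real {a..b} x *\<^sub>R 1 + indicat_real {a..b} x *\<^sub>R (cmod (f x))\<^sup>2)"
    proof (rule AE_I2)
      fix x
      have "cmod (f x) \<le> 1 + (cmod (f x))\<^sup>2"
      proof (cases "cmod (f x) \<le> 1")
        case False
        then have "cmod (f x) * 1 \<le> cmod (f x) * cmod (f x)" by (intro mult_left_mono) auto
        then show ?thesis by (simp add: power2_eq_square)
      next
        case True then show ?thesis using zero_le_power2[of "cmod (f x)"] by linarith
      qed
      then show "norm (indicat_real {a..b} x *\<^sub>R f x)
         \<le> norm (indicat_real {a..b} x *\<^sub>R 1 + indicat_real {a..b} x *\<^sub>R (cmod (f x))\<^sup>2)"
        by (auto simp: indicator_def)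
    qed
  qed
qed



lemma integral_support:
  fixes f :: "real \<Rightarrow> 'a::euclidean_space"
  assumes "a \<le> b" "\<And>x. x \<notin> {a..b} \<Longrightarrow> f x = 0"
  shows "integral\<^sup>L lborel f = (LBINT x=a..b. f x)"
proof -
  have "(LBINT x=a..b. f x) = (LBINT x : {a..b}. f x)" using assms(1) by (rule interval_integral_Icc)
  also have "\<dots> = integral\<^sup>L lborel f"
    unfolding set_lebesgue_integral_def
  proof (rule Bochner_Integration.integral_cong)
    fix x show "indicator {a..b} x *\<^sub>R f x = f x"
      using assms(2)[of x] by (cases "x \<in> {a..b}") auto
  qed simp
  finally show ?thesis by simp
qed

lemma test_deriv_cont: "test_fun \<psi> \<Longrightarrow> continuous_on A (deriv \<psi>)"
  by (simp add: test_cont test_fun_deriv)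

lemma test_integral_deriv: "test_fun \<psi> \<Longrightarrow> integral\<^sup>L lborel (deriv \<psi>) = 0"
proof -
  assume t: "test_fun \<psi>"
  then obtain R where R: "R > 0" "\<And>x. R < \<bar>x\<bar> \<Longrightarrow> \<psi> x = 0" using test_support[OF t] by blast
  have "integral\<^sup>L lborel (deriv \<psi>) = (LBINT x=-(R+1)..R+1. deriv \<psi> x)"
  proof (rule integral_support)
    fix x :: real assume "x \<notin> {-(R+1)..R+1}"
    then have "R < \<bar>x\<bar>" by (auto simp: abs_if)
    then show "deriv \<psi> x = 0" using deriv_zero_outside[of R \<psi> x] R(2) by blast
  qed (use R in simp)
  also have "\<dots> = \<psi> (R+1) - \<psi> (-(R+1))"
  proof (rule interval_integral_FTC_finite)
    show "continuous_on {min (- (R + 1)) (R + 1)..max (- (R + 1)) (R + 1)} (deriv \<psi>)"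
      by (rule test_deriv_cont[OF t])
    fix x
    have "(\<psi> has_vector_derivative deriv \<psi> x) (at x)"
      using test_DERIV[OF t] by (simp add: has_real_derivative_iff_has_vector_derivative)
    then show "(\<psi> has_vector_derivative deriv \<psi> x) (at x within {min (- (R + 1)) (R + 1)..max (- (R + 1)) (R + 1)})"
      by (rule has_vector_derivative_at_within)
  qed
  also have "\<dots> = 0" using R by simp
  finally show ?thesis .
qed

lemma antideriv_LBINT:
  fixes f :: "real \<Rightarrow> 'a::euclidean_space" and c x :: real
  assumes "continuous_on UNIV f"
  shows "((\<lambda>u. LBINT y=c..u. f y) has_vector_derivative f x) (at x)"
proof -
  have "((\<lambda>u. LBINT y=c..u. f y) has_vector_derivative f x) (at x within {min c x - 1..max c x + 1})"
    by (rule interval_integral_FTC2) (auto intro: continuous_on_subset[OF assms])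
  moreover have "at x within {min c x - 1..max c x + 1} = at x"
    by (rule at_within_Icc_at) auto
  ultimately show ?thesis by simp
qed


lemma integrable_ind_max:
  fixes h :: "real \<Rightarrow> real"
  assumes hi: "integrable lborel h" and A: "A \<in> sets borel"
  shows "integrable lborel (\<lambda>t. indicator A t * max (h t) 0)"
proof -
  have "integrable lborel (\<lambda>t. max (h t) 0)" by (intro integrable_max hi) auto
  then show ?thesis
    using integrable_mult_indicator[of A lborel "\<lambda>t. max (h t) 0"] A by simp
qed

lemma FL0_real:
  fixes w :: "real \<Rightarrow> real"
  assumes w: "integrable lborel w"
    and z: "\<And>x. integral\<^sup>L lborel (\<lambda>t. indicator {x<..} t * w t) = 0"
  shows "AE t in lborel. w t = 0"
proof -
  have wm[measurable]: "w \<in> borel_measurable borel" using w by auto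
  define M where "M = density lborel (\<lambda>t. ennreal (w t))"
  define N where "N = density lborel (\<lambda>t. ennreal (- w t))"
  have key: "emeasure (density lborel (\<lambda>t. ennreal (h t))) {x<..}
      = ennreal (integral\<^sup>L lborel (\<lambda>t. indicator {x<..} t * max (h t) 0))"
    if hi: "integrable lborel h" for h :: "real \<Rightarrow> real" and x
  proof -
    have [measurable]: "h \<in> borel_measurable borel" using hi by auto
    have "emeasure (density lborel (\<lambda>t. ennreal (h t))) {x<..}
        = (\<integral>\<^sup>+ t. ennreal (h t) * indicator {x<..} t \<partial>lborel)"
      by (subst emeasure_density) auto
    also have "\<dots> = (\<integral>\<^sup>+ t. ennreal (indicator {x<..} t * max (h t) 0) \<partial>lborel)"
      by (intro nn_integral_cong) (auto simp: indicator_def max_def ennreal_neg)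
    also have "\<dots> = ennreal (integral\<^sup>L lborel (\<lambda>t. indicator {x<..} t * max (h t) 0))"
    proof (rule nn_integral_eq_integral)
      have "integrable lborel (\<lambda>t. max (h t) 0)" by (intro integrable_max hi) auto
      then show "integrable lborel (\<lambda>t. indicator {x<..} t * max (h t) 0)"
        using integrable_mult_indicator[of "{x<..}" lborel "\<lambda>t. max (h t) 0"] by simp
    qed auto
    finally show ?thesis .
  qed
  have MN: "M = N"
  proof (rule measure_eqI_lessThan)
    show "sets M = sets borel" "sets N = sets borel" by (simp_all add: M_def N_def)
    fix x
    show "emeasure M {x<..} < \<infinity>" unfolding M_def using key[OF w] by simp
    have e1: "integral\<^sup>L lborel (\<lambda>t. indicator {x<..} t * max (w t) 0) - integral\<^sup>L lborel (\<lambda>t. indicator {x<..} t * max (- w t) 0)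
        = integral\<^sup>L lborel (\<lambda>t. indicator {x<..} t * w t)"
    proof -
      have "integral\<^sup>L lborel (\<lambda>t. indicator {x<..} t * max (w t) 0) - integral\<^sup>L lborel (\<lambda>t. indicator {x<..} t * max (- w t) 0)
        = integral\<^sup>L lborel (\<lambda>t. indicator {x<..} t * max (w t) 0 - indicator {x<..} t * max (- w t) 0)"
        using w by (intro Bochner_Integration.integral_diff[symmetric] integrable_ind_max integrable_minus) auto
      also have "\<dots> = integral\<^sup>L lborel (\<lambda>t. indicator {x<..} t * w t)"
        by (intro Bochner_Integration.integral_cong) (auto simp: max_def algebra_simps)
      finally show ?thesis .
    qed
    show "emeasure M {x<..} = emeasure N {x<..}"
      unfolding M_def N_def key[OF w] key[OF integrable_minus[OF w]]
      using e1 z[of x] by simp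
  qed
  have "AE t in lborel. ennreal (w t) = ennreal (- w t)"
    using MN unfolding M_def N_def
    by (intro sigma_finite_measure.density_unique[OF sigma_finite_lborel]) auto
  then show ?thesis
  proof (rule AE_mp[OF _ AE_I2], intro impI)
    fix t assume "ennreal (w t) = ennreal (- w t)"
    then show "w t = 0"
      by (cases "w t \<ge> 0") (auto simp: ennreal_neg ennreal_eq_0_iff)
  qed
qed

lemma eventually_ge_inv:
  fixes d :: real assumes "d > 0"
  shows "eventually (\<lambda>m. 1 \<le> real (Suc m) * d) sequentially"
proof -
  obtain k :: nat where k: "1 / d < real k" using reals_Archimedean2 by blast
  show ?thesis unfolding eventually_sequentially
  proof (intro exI allI impI)
    fix m assume "k \<le> m"
    then have "1 / d < real (Suc m)" using k by linarith
    then show "1 \<le> real (Suc m) * d" using assms by (simp add: field_simps)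
  qed
qed

definition theta :: "real \<Rightarrow> real \<Rightarrow> nat \<Rightarrow> real \<Rightarrow> real" where
  "theta a b m x = St (real (Suc m) * (x - a)) * St (real (Suc m) * (b - x))"

lemma theta_test: "test_fun (theta a b m)"
proof -
  have "smooth n (\<lambda>x. St (real (Suc m) * x + (- real (Suc m) * a)) * St ((- real (Suc m)) * x + real (Suc m) * b))" for n
    by (intro smooth_mult smooth_affine smooth_St)
  then have "smooth n (theta a b m)" for n
    unfolding theta_def by (simp add: algebra_simps)
  moreover have "{x. theta a b m x \<noteq> 0} \<subseteq> {a..b}"
  proof
    fix x assume "x \<in> {x. theta a b m x \<noteq> 0}"
    then have "\<not> x < a" "\<not> b < x"
      by (auto simp: theta_def St_zero mult_nonneg_nonpos mult_nonneg_nonneg)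
    then show "x \<in> {a..b}" by auto
  qed
  then have "bounded {x. theta a b m x \<noteq> 0}" by (rule bounded_subset[OF bounded_closed_interval])
  ultimately show ?thesis by (simp add: test_fun_iff)
qed

lemma theta_bound: "\<bar>theta a b m x\<bar> \<le> indicator {a..b} x"
proof (cases "x \<in> {a..b}")
  case True
  then show ?thesis using St_nonneg St_le1
    by (simp add: theta_def abs_mult) (meson mult_le_one St_nonneg St_le1)
next
  case False
  then have "x < a \<or> b < x" by auto
  then show ?thesis using False
    by (auto simp: theta_def St_zero mult_nonneg_nonpos mult_nonneg_nonneg)
qed

lemma theta_lim: "(\<lambda>m. theta a b m x) \<longlonglongrightarrow> indicator {a<..<b} x"
proof (cases "x \<in> {a<..<b}")
  case True
  then have "eventually (\<lambda>m. 1 \<le> real (Suc m) * (x - a)) sequentially"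
     "eventually (\<lambda>m. 1 \<le> real (Suc m) * (b - x)) sequentially"
    using eventually_ge_inv[of "x-a"] eventually_ge_inv[of "b-x"] by auto
  then have "eventually (\<lambda>m. theta a b m x = 1) sequentially"
    by eventually_elim (simp add: theta_def St_one)
  then show ?thesis using True by (simp add: tendsto_eventually)
next
  case False
  then have "x \<le> a \<or> b \<le> x" by auto
  then have "\<And>m. theta a b m x = 0"
    by (auto simp: theta_def St_zero mult_nonneg_nonpos mult_nonneg_nonneg)
  then show ?thesis using False by simp
qed


lemma FL0_interval:
  fixes w :: "real \<Rightarrow> complex"
  assumes w: "locint w"
    and z: "\<And>\<theta>. test_fun \<theta> \<Longrightarrow> integral\<^sup>L lborel (\<lambda>x. w x * of_real (\<theta> x)) = 0"
  shows "integral\<^sup>L lborel (\<lambda>x. w x * of_real (indicator {a<..<b} x)) = 0"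
proof -
  have wm[measurable]: "w \<in> borel_measurable borel" using w by (simp add: locint_def)
  have wi: "integrable lborel (\<lambda>x. indicator {a..b} x *\<^sub>R w x)"
    using w by (simp add: locint_def set_integrable_def)
  have thmeas[measurable]: "theta a b m \<in> borel_measurable borel" for m
    by (intro borel_measurable_continuous_onI test_cont theta_test)
  have "(\<lambda>m. integral\<^sup>L lborel (\<lambda>x. w x * of_real (theta a b m x)))
        \<longlonglongrightarrow> integral\<^sup>L lborel (\<lambda>x. w x * of_real (indicator {a<..<b} x))"
  proof (rule integral_dominated_convergence[where w="\<lambda>x. norm (indicator {a..b} x *\<^sub>R w x)"])
    show "(\<lambda>x. w x * complex_of_real (indicator {a<..<b} x)) \<in> borel_measurable lborel" by measurable
    show "\<And>m. (\<lambda>x. w x * complex_of_real (theta a b m x)) \<in> borel_measurable lborel" by measurable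
    show "integrable lborel (\<lambda>x. norm (indicator {a..b} x *\<^sub>R w x))" using wi by (rule integrable_norm)
    show "AE x in lborel. (\<lambda>m. w x * complex_of_real (theta a b m x)) \<longlonglongrightarrow> w x * complex_of_real (indicator {a<..<b} x)"
      by (intro AE_I2 tendsto_mult tendsto_const tendsto_of_real theta_lim)
    fix m
    show "AE x in lborel. norm (w x * complex_of_real (theta a b m x)) \<le> norm (indicator {a..b} x *\<^sub>R w x)"
    proof (rule AE_I2)
      fix x
      have "cmod (w x) * \<bar>theta a b m x\<bar> \<le> cmod (w x) * indicator {a..b} x"
        by (intro mult_left_mono theta_bound) auto
      then show "norm (w x * complex_of_real (theta a b m x)) \<le> norm (indicator {a..b} x *\<^sub>R w x)"
        by (simp add: norm_mult mult.commute)
    qed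
  qed
  moreover have "(\<lambda>m. integral\<^sup>L lborel (\<lambda>x. w x * of_real (theta a b m x))) = (\<lambda>m. 0)"
    using z theta_test by auto
  ultimately show ?thesis using LIMSEQ_unique tendsto_const by metis
qed

lemma FL0:
  fixes w :: "real \<Rightarrow> complex"
  assumes w: "locint w"
    and z: "\<And>\<theta>. test_fun \<theta> \<Longrightarrow> integral\<^sup>L lborel (\<lambda>x. w x * of_real (\<theta> x)) = 0"
  shows "AE x in lborel. w x = 0"
proof -
  have wm[measurable]: "w \<in> borel_measurable borel" using w by (simp add: locint_def)
  have AEN: "AE x in lborel. \<bar>x\<bar> < real N \<longrightarrow> w x = 0" for N :: nat
  proof -
    define wN where "wN = (\<lambda>x. indicator {- real N<..<real N} x *\<^sub>R w x)"
    have wNi: "integrable lborel wN"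
    proof -
      have "integrable lborel (\<lambda>x. indicator {- real N<..<real N} x *\<^sub>R (indicator {- real N..real N} x *\<^sub>R w x))"
        by (rule integrable_mult_indicator) (use w in \<open>auto simp: locint_def set_integrable_def\<close>)
      also have "(\<lambda>x. indicator {- real N<..<real N} x *\<^sub>R (indicator {- real N..real N} x *\<^sub>R w x)) = wN"
        by (auto simp: wN_def indicator_def)
      finally show ?thesis .
    qed
    have int0: "integral\<^sup>L lborel (\<lambda>t. indicator {x<..} t *\<^sub>R wN t) = 0" for x
    proof -
      have "(\<lambda>t. indicator {x<..} t *\<^sub>R wN t) = (\<lambda>t. w t * of_real (indicator {max x (- real N)<..<real N} t))"
        by (auto simp: wN_def indicator_def)
      then show ?thesis using FL0_interval[OF w z] by simp
    qed
    have iR: "integrable lborel (\<lambda>t. indicator {x<..} t *\<^sub>R wN t)" for x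
      using wNi by (intro integrable_mult_indicator) auto
    have "AE t in lborel. Re (wN t) = 0"
    proof (rule FL0_real)
      show "integrable lborel (\<lambda>t. Re (wN t))" using wNi by simp
      fix x
      have "integral\<^sup>L lborel (\<lambda>t. indicator {x<..} t * Re (wN t)) = integral\<^sup>L lborel (\<lambda>t. Re (indicator {x<..} t *\<^sub>R wN t))"
        by simp
      also have "\<dots> = Re (integral\<^sup>L lborel (\<lambda>t. indicator {x<..} t *\<^sub>R wN t))"
        using iR by (rule integral_Re)
      finally show "integral\<^sup>L lborel (\<lambda>t. indicator {x<..} t * Re (wN t)) = 0" using int0 by simp
    qed
    moreover have "AE t in lborel. Im (wN t) = 0"
    proof (rule FL0_real)
      show "integrable lborel (\<lambda>t. Im (wN t))" using wNi by simp
      fix x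
      have "integral\<^sup>L lborel (\<lambda>t. indicator {x<..} t * Im (wN t)) = integral\<^sup>L lborel (\<lambda>t. Im (indicator {x<..} t *\<^sub>R wN t))"
        by simp
      also have "\<dots> = Im (integral\<^sup>L lborel (\<lambda>t. indicator {x<..} t *\<^sub>R wN t))"
        using iR by (rule integral_Im)
      finally show "integral\<^sup>L lborel (\<lambda>t. indicator {x<..} t * Im (wN t)) = 0" using int0 by simp
    qed
    ultimately show ?thesis
    proof eventually_elim
      case (elim x)
      then have "wN x = 0" by (simp add: complex_eq_iff)
      then show ?case by (auto simp: wN_def indicator_def abs_less_iff)
    qed
  qed
  then have "AE x in lborel. \<forall>N::nat. \<bar>x\<bar> < real N \<longrightarrow> w x = 0"
    by (subst AE_all_countable) (use AEN in blast)
  then show ?thesis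
  proof eventually_elim
    case (elim x)
    obtain N :: nat where "\<bar>x\<bar> < real N" using reals_Archimedean2 by blast
    then show ?case using elim by blast
  qed
qed


lemma locint_diff:
  assumes "locint f" "locint g" shows "locint (\<lambda>x. f x - g x)"
  unfolding locint_def
proof (intro conjI allI)
  show "(\<lambda>x. f x - g x) \<in> borel_measurable borel" using assms by (auto simp: locint_def)
  fix a b
  have "integrable lborel (\<lambda>x. indicator {a..b} x *\<^sub>R f x - indicator {a..b} x *\<^sub>R g x)"
    using assms by (intro Bochner_Integration.integrable_diff) (auto simp: locint_def set_integrable_def)
  then show "set_integrable lborel {a..b} (\<lambda>x. f x - g x)"
    by (simp add: set_integrable_def scaleR_diff_right)
qed

lemma locint_add:
  assumes "locint f" "locint g" shows "locint (\<lambda>x. f x + g x)"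
  unfolding locint_def
proof (intro conjI allI)
  show "(\<lambda>x. f x + g x) \<in> borel_measurable borel" using assms by (auto simp: locint_def)
  fix a b
  have "integrable lborel (\<lambda>x. indicator {a..b} x *\<^sub>R f x + indicator {a..b} x *\<^sub>R g x)"
    using assms by (intro Bochner_Integration.integrable_add) (auto simp: locint_def set_integrable_def)
  then show "set_integrable lborel {a..b} (\<lambda>x. f x + g x)"
    by (simp add: set_integrable_def scaleR_add_right)
qed

lemma locint_const: "locint (\<lambda>x. c)"
  by (rule cont_locint) simp

lemma deriv_locally_const:
  fixes f :: "real \<Rightarrow> real"
  assumes "open S" "x \<in> S" "\<And>y. y \<in> S \<Longrightarrow> f y = c"
  shows "deriv f x = 0"
proof -
  have "((\<lambda>_. c) has_real_derivative 0) (at x)" by simp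
  then have "(f has_real_derivative 0) (at x)"
    by (rule has_field_derivative_transform_within_open[where S=S]) (use assms in auto)
  then show ?thesis by (rule DERIV_imp_deriv)
qed

lemma St_DERIV: "(St has_real_derivative deriv St x) (at x)"
  using smooth_St[of 1] by (simp add: DERIV_deriv_iff_real_differentiable)

lemma rho_test: "test_fun (deriv St)"
proof -
  have "smooth n (deriv St)" for n using smooth_St[of "Suc n"] by simp
  moreover have "{x. deriv St x \<noteq> 0} \<subseteq> {0..1}"
  proof
    fix x assume x: "x \<in> {x. deriv St x \<noteq> 0}"
    have "\<not> x < 0"
    proof
      assume "x < 0"
      then have "deriv St x = 0" by (intro deriv_locally_const[of "{..<0}" x St 0]) (auto intro: St_zero)
      then show False using x by simp
    qed
    moreover have "\<not> x > 1"
    proof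
      assume "x > 1"
      then have "deriv St x = 0" by (intro deriv_locally_const[of "{1<..}" x St 1]) (auto intro: St_one)
      then show False using x by simp
    qed
    ultimately show "x \<in> {0..1}" by auto
  qed
  then have "bounded {x. deriv St x \<noteq> 0}" by (rule bounded_subset[OF bounded_closed_interval])
  ultimately show ?thesis by (simp add: test_fun_iff)
qed

lemma rho_integral: "integral\<^sup>L lborel (deriv St) = 1"
proof -
  have "integral\<^sup>L lborel (deriv St) = (LBINT x=(-1::real)..(2::real). deriv St x)"
  proof (rule integral_support)
    fix x :: real assume "x \<notin> {-1..2}"
    then have "x < 0 \<or> x > 1" by auto
    then show "deriv St x = 0"
    proof
      assume "x < 0"
      then show "deriv St x = 0" by (intro deriv_locally_const[of "{..<0}" x St 0]) (auto intro: St_zero)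
    next
      assume "x > 1"
      then show "deriv St x = 0" by (intro deriv_locally_const[of "{1<..}" x St 1]) (auto intro: St_one)
    qed
  qed simp
  also have "\<dots> = St 2 - St (-1)"
  proof (rule interval_integral_FTC_finite)
    show "continuous_on {min (- 1) 2..max (- 1) 2} (deriv St)"
      by (rule test_cont[OF rho_test])
    fix x
    have "(St has_vector_derivative deriv St x) (at x)"
      using St_DERIV[of x] by (simp only: has_real_derivative_iff_has_vector_derivative)
    then show "(St has_vector_derivative deriv St x) (at x within {min (- 1) 2..max (- 1) 2})"
      by (rule has_vector_derivative_at_within)
  qed
  also have "\<dots> = 1" by (simp add: St_zero St_one)
  finally show ?thesis .
qed



lemma antideriv_test:
  assumes t: "test_fun \<theta>"
  shows "\<exists>\<Psi>. test_fun \<Psi> \<and> deriv \<Psi> = (\<lambda>x. \<theta> x - integral\<^sup>L lborel \<theta> * deriv St x)"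
proof -
  obtain R where R: "R > 0" "\<And>x. R < \<bar>x\<bar> \<Longrightarrow> \<theta> x = 0" using test_support[OF t] by blast
  define R' where "R' = R + 1"
  define I0 where "I0 = integral\<^sup>L lborel \<theta>"
  define \<Theta> where "\<Theta> = (\<lambda>x::real. LBINT y=-R'..x. \<theta> y)"
  define \<Psi> where "\<Psi> = (\<lambda>x. \<Theta> x - I0 * St x)"
  have cth: "continuous_on UNIV \<theta>" using test_cont[OF t] .
  have dTh: "(\<Theta> has_real_derivative \<theta> x) (at x)" for x
    unfolding \<Theta>_def has_real_derivative_iff_has_vector_derivative
    by (rule antideriv_LBINT[OF cth])
  have dPsi: "(\<Psi> has_real_derivative (\<theta> x - I0 * deriv St x)) (at x)" for x
    using DERIV_diff[OF dTh[of x] DERIV_cmult[OF St_DERIV[of x], of I0]] unfolding \<Psi>_def by simp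
  have sm: "smooth n (\<lambda>x. \<theta> x - I0 * deriv St x)" for n
  proof -
    have "smooth n (\<lambda>x. \<theta> x + (- I0) * deriv St x)"
      using t rho_test by (intro smooth_add smooth_mult smooth_const) (auto simp: test_fun_iff)
    then show ?thesis by simp
  qed
  have smP: "smooth n \<Psi>" for n
    using smooth_antideriv[OF dPsi sm[of n]] by (rule smooth_Suc_D)
  have z1: "\<Psi> x = 0" if "x < - R'" for x
  proof -
    have "\<Theta> x = - (LBINT y=x..-R'. \<theta> y)" unfolding \<Theta>_def by (rule interval_integral_endpoints_reverse)
    also have "(LBINT y=x..-R'. \<theta> y) = (LBINT y=x..-R'. 0)"
    proof (rule interval_integral_cong)
      fix y assume "y \<in> einterval (min (ereal x) (ereal (- R'))) (max (ereal x) (ereal (- R')))"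
      moreover have "min (ereal x) (ereal (- R')) = ereal x" "max (ereal x) (ereal (- R')) = ereal (- R')"
        using that by auto
      ultimately have "y < - R'" by (simp add: einterval_iff)
      then show "\<theta> y = 0" using R(2)[of y] R'_def by auto
    qed
    finally have "\<Theta> x = 0" by simp
    moreover have "St x = 0" using that R(1) R'_def by (intro St_zero) auto
    ultimately show ?thesis by (simp add: \<Psi>_def)
  qed
  have z2: "\<Psi> x = 0" if "x > R'" for x
  proof -
    have "I0 = (LBINT y=-R'..x. \<theta> y)"
      unfolding I0_def
    proof (rule integral_support)
      fix y assume "y \<notin> {-R'..x}"
      then have "R < \<bar>y\<bar>" using that R'_def by auto
      then show "\<theta> y = 0" by (rule R(2))
    qed (use that R(1) R'_def in auto)
    moreover have "St x = 1" using that R(1) R'_def by (intro St_one) auto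
    ultimately show ?thesis by (simp add: \<Psi>_def \<Theta>_def)
  qed
  have "{x. \<Psi> x \<noteq> 0} \<subseteq> {-R'..R'}"
  proof
    fix x assume "x \<in> {x. \<Psi> x \<noteq> 0}"
    then have "\<not> x < - R'" "\<not> x > R'" using z1 z2 by auto
    then show "x \<in> {-R'..R'}" by simp
  qed
  then have "bounded {x. \<Psi> x \<noteq> 0}" by (rule bounded_subset[OF bounded_closed_interval])
  then have "test_fun \<Psi>" using smP by (simp add: test_fun_iff)
  moreover have "deriv \<Psi> = (\<lambda>x. \<theta> x - I0 * deriv St x)" by (rule deriv_eqI) (rule dPsi)
  ultimately show ?thesis unfolding I0_def by blast
qed

lemma FL1:
  fixes v :: "real \<Rightarrow> complex"
  assumes v: "locint v"
    and z: "\<And>\<psi>. test_fun \<psi> \<Longrightarrow> integral\<^sup>L lborel (\<lambda>x. v x * of_real (deriv \<psi> x)) = 0"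
  shows "\<exists>C. AE x in lborel. v x = C"
proof -
  define A where "A = integral\<^sup>L lborel (\<lambda>x. v x * of_real (deriv St x))"
  have "AE x in lborel. v x - A = 0"
  proof (rule FL0)
    show "locint (\<lambda>x. v x - A)" by (intro locint_diff v locint_const)
    fix \<theta> assume t: "test_fun \<theta>"
    define I0 where "I0 = integral\<^sup>L lborel \<theta>"
    obtain \<Psi> where P: "test_fun \<Psi>" "deriv \<Psi> = (\<lambda>x. \<theta> x - I0 * deriv St x)"
      using antideriv_test[OF t] unfolding I0_def by blast
    have i1: "integrable lborel (\<lambda>x. v x * of_real (\<theta> x))" by (rule integrable_test_mult[OF v t])
    have i2: "integrable lborel (\<lambda>x. v x * of_real (deriv St x))" by (rule integrable_test_mult[OF v rho_test])
    have "0 = integral\<^sup>L lborel (\<lambda>x. v x * of_real (deriv \<Psi> x))" using z[OF P(1)] by simp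
    also have "\<dots> = integral\<^sup>L lborel (\<lambda>x. v x * of_real (\<theta> x) - of_real I0 * (v x * of_real (deriv St x)))"
      unfolding P(2) by (intro Bochner_Integration.integral_cong) (auto simp: algebra_simps)
    also have "\<dots> = integral\<^sup>L lborel (\<lambda>x. v x * of_real (\<theta> x)) - of_real I0 * A"
      using i1 i2 by (simp add: A_def)
    finally have e1: "integral\<^sup>L lborel (\<lambda>x. v x * of_real (\<theta> x)) = of_real I0 * A" by simp
    have i3: "integrable lborel (\<lambda>x. A * of_real (\<theta> x))" by (rule integrable_test_mult[OF locint_const t])
    have "integral\<^sup>L lborel (\<lambda>x. (v x - A) * of_real (\<theta> x))
        = integral\<^sup>L lborel (\<lambda>x. v x * of_real (\<theta> x) - A * of_real (\<theta> x))"
      by (simp add: algebra_simps)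
    also have "\<dots> = integral\<^sup>L lborel (\<lambda>x. v x * of_real (\<theta> x)) - integral\<^sup>L lborel (\<lambda>x. A * of_real (\<theta> x))"
      using i1 i3 by (rule Bochner_Integration.integral_diff)
    also have "integral\<^sup>L lborel (\<lambda>x. A * of_real (\<theta> x)) = A * of_real I0"
      by (simp add: I0_def)
    finally show "integral\<^sup>L lborel (\<lambda>x. (v x - A) * of_real (\<theta> x)) = 0" using e1 by simp
  qed
  then show ?thesis by (intro exI[of _ A]) auto
qed


lemma locint_interval:
  assumes "locint f" shows "interval_lebesgue_integrable lborel (ereal a) (ereal b) f"
proof -
  have "set_integrable lborel {min a b..max a b} f" using assms by (simp add: locint_def)
  then have "set_integrable lborel {min a b<..<max a b} f"
    by (rule set_integrable_subset) auto
  then show ?thesis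
    by (auto simp: interval_lebesgue_integrable_def min_def max_def split: if_splits)
qed

lemma LBINT_split:
  assumes "locint f" "a \<le> x"
  shows "(LBINT s=0..x. f s) = (LBINT s=0..a. f s) + (LBINT s:{a..x}. f s)"
proof -
  have "(LBINT s=ereal 0..ereal a. f s) + (LBINT s=ereal a..ereal x. f s) = (LBINT s=ereal 0..ereal x. f s)"
  proof (rule interval_integral_sum)
    show "interval_lebesgue_integrable lborel (min (ereal 0) (min (ereal a) (ereal x))) (max (ereal 0) (max (ereal a) (ereal x))) f"
      using locint_interval[OF assms(1), of "min 0 (min a x)" "max 0 (max a x)"] by simp
  qed
  moreover have "(LBINT s=ereal a..ereal x. f s) = (LBINT s:{a..x}. f s)"
    using assms(2) by (rule interval_integral_Icc)
  ultimately show ?thesis by (simp add: zero_ereal_def)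
qed

lemma IBP_AC:
  fixes f :: "real \<Rightarrow> complex" and \<psi> :: "real \<Rightarrow> real"
  assumes f: "locint f" and t: "test_fun \<psi>"
  shows "integral\<^sup>L lborel (\<lambda>x. (LBINT s=0..x. f s) * of_real (deriv \<psi> x))
       = - integral\<^sup>L lborel (\<lambda>x. f x * of_real (\<psi> x))"
proof -
  obtain R where R: "R > 0" "\<And>x. R < \<bar>x\<bar> \<Longrightarrow> \<psi> x = 0" using test_support[OF t] by blast
  define S where "S = R + 1"
  have S0: "S > 0" using R S_def by auto
  have psi0: "\<psi> x = 0" if "S \<le> \<bar>x\<bar>" for x using R(2)[of x] that S_def by auto
  define dp where "dp = deriv \<psi>"
  have dp0: "dp x = 0" if "S \<le> \<bar>x\<bar>" for x
    unfolding dp_def by (rule deriv_zero_outside[of R]) (use R(2) that S_def in auto)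
  have fm[measurable]: "f \<in> borel_measurable borel" using f by (simp add: locint_def)
  have dpc: "continuous_on UNIV dp" unfolding dp_def by (rule test_deriv_cont[OF t])
  have dpm[measurable]: "dp \<in> borel_measurable borel" by (rule borel_measurable_continuous_onI[OF dpc])
  obtain M where M: "\<And>x. \<bar>dp x\<bar> \<le> M"
  proof -
    have "compact (dp ` {-S..S})"
      by (rule compact_continuous_image[OF continuous_on_subset[OF dpc]]) auto
    then obtain a where a: "\<And>y. y \<in> dp ` {-S..S} \<Longrightarrow> norm y \<le> a"
      using compact_imp_bounded bounded_iff by metis
    have a0: "0 \<le> a" using a[of "dp 0"] S0 by force
    show ?thesis
    proof (rule that[of a])
      fix x show "\<bar>dp x\<bar> \<le> a"
      proof (cases "x \<in> {-S..S}")
        case True then show ?thesis using a[of "dp x"] by auto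
      next
        case False then have "S \<le> \<bar>x\<bar>" by auto
        then show ?thesis using dp0 a0 by simp
      qed
    qed
  qed
  define H where "H = (\<lambda>s x. if -S \<le> s \<and> s \<le> x \<and> x \<le> S then f s * of_real (dp x) else 0)"
  have Hm[measurable]: "case_prod H \<in> borel_measurable (lborel \<Otimes>\<^sub>M lborel)"
    unfolding H_def by measurable
  define G where "G = (\<lambda>(s::real, x::real). (indicator {-S..S} s * norm (f s)) * (M * indicator {-S..S} x))"
  have fi: "integrable lborel (\<lambda>s. indicator {-S..S} s * norm (f s))"
  proof -
    have "integrable lborel (\<lambda>s. norm (indicator {-S..S} s *\<^sub>R f s))"
      using f by (intro integrable_norm) (simp add: locint_def set_integrable_def)
    then show ?thesis by (simp add: norm_scaleR)
  qed
  have ii: "integrable lborel (\<lambda>x. M * indicator {-S..S} x :: real)"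
    by (intro integrable_mult_right integrable_real_indicator) (use S0 in auto)
  have Gi: "integrable (lborel \<Otimes>\<^sub>M lborel) G"
  proof (rule lborel_pair.Fubini_integrable)
    show "G \<in> borel_measurable (lborel \<Otimes>\<^sub>M lborel)" unfolding G_def by measurable
    have "(\<lambda>s. \<integral>x. norm (G (s, x)) \<partial>lborel) = (\<lambda>s. (indicator {-S..S} s * norm (f s)) * (\<integral>x. norm (M * indicator {-S..S} x) \<partial>lborel))"
    proof (rule ext)
      fix s
      have "\<And>x. norm (G (s, x)) = (indicator {-S..S} s * norm (f s)) * norm (M * indicator {-S..S} x)"
        by (auto simp: G_def abs_mult indicator_def)
      then show "(\<integral>x. norm (G (s, x)) \<partial>lborel) = (indicator {-S..S} s * norm (f s)) * (\<integral>x. norm (M * indicator {-S..S} x) \<partial>lborel)"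
        by simp
    qed
    then show "integrable lborel (\<lambda>s. \<integral>x. norm (G (s, x)) \<partial>lborel)"
      using fi by (simp add: integrable_mult_left)
    show "AE s in lborel. integrable lborel (\<lambda>x. G (s, x))"
      unfolding G_def using ii by (auto intro!: integrable_mult_right)
  qed
  have Hi: "integrable (lborel \<Otimes>\<^sub>M lborel) (case_prod H)"
  proof (rule Bochner_Integration.integrable_bound[OF Gi])
    show "case_prod H \<in> borel_measurable (lborel \<Otimes>\<^sub>M lborel)" by (rule Hm)
    show "AE p in lborel \<Otimes>\<^sub>M lborel. norm (case_prod H p) \<le> norm (G p)"
    proof (rule AE_I2, clarify)
      fix s x :: real
      show "norm (H s x) \<le> norm (G (s, x))"
      proof (cases "-S \<le> s \<and> s \<le> x \<and> x \<le> S")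
        case True
        then have "cmod (f s) * \<bar>dp x\<bar> \<le> cmod (f s) * M" by (intro mult_left_mono M) auto
        moreover have "0 \<le> M" using M[of 0] by linarith
        ultimately show ?thesis using True by (simp add: H_def G_def norm_mult mult.commute)
      next
        case False
        then have "H s x = 0" unfolding H_def by auto
        then show ?thesis by simp
      qed
    qed
  qed
  have step2: "(LBINT s=0..x. f s) * of_real (dp x) = (LBINT s=0..-S. f s) * of_real (dp x) + (\<integral>s. H s x \<partial>lborel)" for x
  proof (cases "x \<in> {-S..S}")
    case True
    have "(LBINT s=0..x. f s) = (LBINT s=0..-S. f s) + (LBINT s:{-S..x}. f s)"
      using True by (intro LBINT_split f) auto
    moreover have "(\<integral>s. H s x \<partial>lborel) = (LBINT s:{-S..x}. f s) * of_real (dp x)"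
      unfolding set_lebesgue_integral_def
      by (subst integral_mult_left_zero[symmetric]) (rule Bochner_Integration.integral_cong, use True in \<open>auto simp: H_def indicator_def\<close>)
    ultimately show ?thesis by (simp add: algebra_simps)
  next
    case False
    then have "S \<le> \<bar>x\<bar>" by auto
    then have "dp x = 0" by (rule dp0)
    moreover have "\<And>s. H s x = 0" using False by (auto simp: H_def)
    ultimately show ?thesis by simp
  qed
  have i1: "integrable lborel (\<lambda>x. (LBINT s=0..-S. f s) * of_real (dp x))"
    using integrable_compact_mult[OF locint_const dpc, of S "LBINT s=0..-S. f s"] dp0 by force
  have i2: "integrable lborel (\<lambda>x. \<integral>s. H s x \<partial>lborel)"
    using lborel_pair.integrable_snd[OF Hi] .
  have "integral\<^sup>L lborel (\<lambda>x. (LBINT s=0..x. f s) * of_real (deriv \<psi> x))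
      = integral\<^sup>L lborel (\<lambda>x. (LBINT s=0..-S. f s) * of_real (dp x) + (\<integral>s. H s x \<partial>lborel))"
    using step2 by (simp add: dp_def)
  also have "\<dots> = integral\<^sup>L lborel (\<lambda>x. (LBINT s=0..-S. f s) * of_real (dp x)) + (\<integral>x. \<integral>s. H s x \<partial>lborel \<partial>lborel)"
    using i1 i2 by (rule Bochner_Integration.integral_add)
  also have "integral\<^sup>L lborel (\<lambda>x. (LBINT s=0..-S. f s) * of_real (dp x)) = 0"
    using test_integral_deriv[OF t] by (simp add: dp_def)
  also have "(\<integral>x. \<integral>s. H s x \<partial>lborel \<partial>lborel) = (\<integral>s. \<integral>x. H s x \<partial>lborel \<partial>lborel)"
    using Hi by (rule lborel_pair.Fubini_integral)
  also have "\<dots> = (\<integral>s. - (f s * of_real (\<psi> s)) \<partial>lborel)"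
  proof (rule Bochner_Integration.integral_cong[OF refl])
    fix s :: real
    show "(\<integral>x. H s x \<partial>lborel) = - (f s * of_real (\<psi> s))"
    proof (cases "s \<in> {-S..S}")
      case True
      have "(\<integral>x. H s x \<partial>lborel) = f s * of_real (\<integral>x. indicator {s..S} x * dp x \<partial>lborel)"
        by (subst integral_complex_of_real[symmetric], subst integral_mult_right_zero[symmetric])
           (rule Bochner_Integration.integral_cong, use True in \<open>auto simp: H_def indicator_def\<close>)
      also have "(\<integral>x. indicator {s..S} x * dp x \<partial>lborel) = (LBINT x=s..S. dp x)"
        using True by (simp add: interval_integral_Icc set_lebesgue_integral_def)
      also have "\<dots> = \<psi> S - \<psi> s"
      proof (rule interval_integral_FTC_finite)
        show "continuous_on {min s S..max s S} dp" by (rule continuous_on_subset[OF dpc]) auto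
        fix y
        have "(\<psi> has_vector_derivative dp y) (at y)"
          using test_DERIV[OF t, of y] by (simp only: dp_def has_real_derivative_iff_has_vector_derivative)
        then show "(\<psi> has_vector_derivative dp y) (at y within {min s S..max s S})"
          by (rule has_vector_derivative_at_within)
      qed
      also have "\<psi> S = 0" using psi0[of S] S0 by simp
      finally show ?thesis by simp
    next
      case False
      then have "S \<le> \<bar>s\<bar>" by auto
      then have "\<psi> s = 0" by (rule psi0)
      moreover have "\<And>x. H s x = 0" using False by (auto simp: H_def)
      ultimately show ?thesis by simp
    qed
  qed
  also have "\<dots> = - integral\<^sup>L lborel (\<lambda>x. f x * of_real (\<psi> x))" by simp
  finally show ?thesis by simp
qed


lemma indef_cont:
  fixes g :: "real \<Rightarrow> complex"
  assumes g: "locint g"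
  shows "continuous_on UNIV (\<lambda>x::real. LBINT s=0..x. g s)"
proof -
  have "isCont (\<lambda>x::real. LBINT s=0..x. g s) x" for x :: real
  proof -
    define N where "N = \<bar>x\<bar> + 1"
    have si: "set_integrable lborel {-N..N} g" using g by (simp add: locint_def)
    have "continuous_on {-N..N} (\<lambda>y. integral {-N..y} g)"
      using set_borel_integral_eq_integral(1)[OF si] by (rule indefinite_integral_continuous_1)
    then have c1: "continuous_on {-N..N} (\<lambda>y. (LBINT s=0..-N. g s) + integral {-N..y} g)"
      by (intro continuous_intros)
    have eq: "(LBINT s=0..y. g s) = (LBINT s=0..-N. g s) + integral {-N..y} g" if "y \<in> {-N..N}" for y
    proof -
      have "(LBINT s=0..y. g s) = (LBINT s=0..-N. g s) + (LBINT s:{-N..y}. g s)"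
        using that by (intro LBINT_split g) auto
      moreover have "set_integrable lborel {-N..y} g" using g by (simp add: locint_def)
      ultimately show ?thesis using set_borel_integral_eq_integral(2) by metis
    qed
    have "continuous_on {-N..N} (\<lambda>y::real. LBINT s=0..y. g s)"
      by (rule continuous_on_cong[OF refl eq, THEN iffD2, OF _ c1]) assumption
    moreover have "x \<in> interior {-N..N}" unfolding N_def by auto
    ultimately show ?thesis by (rule continuous_on_interior)
  qed
  then show ?thesis by (simp add: continuous_at_imp_continuous_on)
qed

lemma locint_LBINT: "locint g \<Longrightarrow> locint (\<lambda>x::real. LBINT s=0..x. g s)"
  by (rule cont_locint) (rule indef_cont)

lemma norm2_deriv:
  fixes y :: "real \<Rightarrow> complex"
  assumes "(y has_vector_derivative y') (at x)"
  shows "((\<lambda>x. (cmod (y x))\<^sup>2) has_real_derivative 2 * Re (cnj (y x) * y')) (at x)"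
proof -
  have "((\<lambda>x. cnj (y x) * y x) has_vector_derivative (cnj (y x) * y' + cnj y' * y x)) (at x)"
    using assms by (intro has_vector_derivative_mult has_vector_derivative_cnj) auto
  then have "((\<lambda>x. Re (cnj (y x) * y x)) has_vector_derivative Re (cnj (y x) * y' + cnj y' * y x)) (at x)"
    by (rule bounded_linear.has_vector_derivative[OF bounded_linear_Re])
  moreover have "(\<lambda>x. Re (cnj (y x) * y x)) = (\<lambda>x. (cmod (y x))\<^sup>2)"
    by (auto simp: complex_mult_cnj cmod_power2 mult.commute[of "cnj _"])
  moreover have "Re (cnj (y x) * y' + cnj y' * y x) = 2 * Re (cnj (y x) * y')"
    by simp
  ultimately show ?thesis by (simp add: has_real_derivative_iff_has_vector_derivative mult.commute)
qed

lemma exists_small: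
  fixes h :: "real \<Rightarrow> real"
  assumes hi: "integrable lborel h" and h0: "\<And>x. h x \<ge> 0" and e: "\<epsilon> > 0"
  shows "\<exists>x \<ge> X. h x < \<epsilon>"
proof (rule ccontr)
  assume "\<not> (\<exists>x \<ge> X. h x < \<epsilon>)"
  then have big: "\<And>x. x \<ge> X \<Longrightarrow> h x \<ge> \<epsilon>" by (auto simp: not_less)
  obtain n :: nat where n: "integral\<^sup>L lborel h / \<epsilon> < real n" using reals_Archimedean2 by blast
  have "\<epsilon> * real n = integral\<^sup>L lborel (\<lambda>x. \<epsilon> * indicator {X..X + real n} x)"
    by simp
  also have "\<dots> \<le> integral\<^sup>L lborel h"
  proof (rule integral_mono)
    show "integrable lborel (\<lambda>x. \<epsilon> * indicat_real {X..X + real n} x)"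
      by (intro integrable_mult_right integrable_real_indicator) auto
    show "integrable lborel h" by (rule hi)
    fix x show "\<epsilon> * indicat_real {X..X + real n} x \<le> h x"
      using big[of x] h0[of x] by (auto simp: indicator_def)
  qed
  finally have "\<epsilon> * real n \<le> integral\<^sup>L lborel h" .
  then show False using n e by (simp add: field_simps)
qed

lemma exists_small_neg:
  fixes h :: "real \<Rightarrow> real"
  assumes hi: "integrable lborel h" and h0: "\<And>x. h x \<ge> 0" and e: "\<epsilon> > 0"
  shows "\<exists>x \<le> X. h x < \<epsilon>"
proof -
  have "integrable lborel (\<lambda>x. h (- x))"
    using hi lborel_integrable_real_affine_iff[of "-1" h 0] by simp
  from exists_small[OF this _ e, of "- X"] h0 obtain x where "x \<ge> - X" "h (- x) < \<epsilon>" by auto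
  then show ?thesis by (intro exI[of _ "- x"]) auto
qed


lemma Re_cnj_le: "Re (cnj u * v) \<le> cmod u * cmod v"
  using complex_Re_le_cmod[of "cnj u * v"] by (simp add: norm_mult)

lemma two_ab_le: "2 * (p * q) \<le> p\<^sup>2 + q\<^sup>2" for p q :: real
  using zero_le_power2[of "p - q"] by (simp add: power2_diff algebra_simps)

lemma ode_unique:
  fixes y z w :: "real \<Rightarrow> complex" and a b T :: real
  assumes dy: "\<And>x. x \<ge> 0 \<Longrightarrow> (y has_vector_derivative z x) (at x)"
    and dz: "\<And>x. x \<ge> 0 \<Longrightarrow> (z has_vector_derivative w x) (at x)"
    and bw: "\<And>x. x \<ge> 0 \<Longrightarrow> cmod (w x) \<le> (a + b * (cmod (y x))\<^sup>2) * cmod (y x)"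
    and a: "a \<ge> 0" and b: "b \<ge> 0"
    and y0: "y 0 = 0" and z0: "z 0 = 0" and T: "T \<ge> 0"
  shows "y T = 0"
proof -
  have cy: "continuous_on {0..T} y"
  proof (intro continuous_at_imp_continuous_on ballI)
    fix x assume "x \<in> {0..T}"
    then show "isCont y x" using dy[of x] has_vector_derivative_continuous by auto
  qed
  have "compact (y ` {0..T})" by (rule compact_continuous_image[OF cy]) auto
  then obtain B0 where B0: "\<And>v. v \<in> y ` {0..T} \<Longrightarrow> norm v \<le> B0"
    using compact_imp_bounded bounded_iff by metis
  define B where "B = max B0 0"
  have B: "\<And>x. x \<in> {0..T} \<Longrightarrow> cmod (y x) \<le> B" using B0 unfolding B_def by fastforce
  have B0': "B \<ge> 0" by (simp add: B_def)
  define C where "C = 1 + a + b * B\<^sup>2"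
  define Q where "Q = (\<lambda>x. (cmod (y x))\<^sup>2 + (cmod (z x))\<^sup>2)"
  define Q' where "Q' = (\<lambda>x. 2 * Re (cnj (y x) * z x) + 2 * Re (cnj (z x) * w x))"
  define R where "R = (\<lambda>x. exp (- C * x) * Q x)"
  have dQ: "(Q has_real_derivative Q' x) (at x)" if "x \<ge> 0" for x
    unfolding Q_def Q'_def
    by (intro DERIV_add norm2_deriv dy dz that)
  have dR: "(R has_real_derivative exp (- C * x) * (Q' x - C * Q x)) (at x)" if "x \<ge> 0" for x
  proof -
    have "((\<lambda>x. exp (- C * x)) has_real_derivative exp (- C * x) * (- C)) (at x)"
      by (auto intro!: derivative_eq_intros)
    from DERIV_mult[OF this dQ[OF that]] show ?thesis
      unfolding R_def by (simp add: algebra_simps)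
  qed
  have Qle: "Q' x \<le> C * Q x" if "x \<in> {0..T}" for x
  proof -
    have x0: "x \<ge> 0" using that by auto
    let ?y = "cmod (y x)" and ?z = "cmod (z x)" and ?w = "cmod (w x)"
    have 1: "2 * Re (cnj (y x) * z x) \<le> ?y\<^sup>2 + ?z\<^sup>2"
      using Re_cnj_le[of "y x" "z x"] two_ab_le[of ?y ?z] by linarith
    have yb: "?y\<^sup>2 \<le> B\<^sup>2" using B[OF that] by (intro power_mono) auto
    have "?w \<le> (a + b * ?y\<^sup>2) * ?y" by (rule bw[OF x0])
    also have "\<dots> \<le> (a + b * B\<^sup>2) * ?y"
      using yb a b by (intro mult_right_mono add_left_mono mult_left_mono) auto
    finally have wb: "?w \<le> (a + b * B\<^sup>2) * ?y" .
    have "2 * Re (cnj (z x) * w x) \<le> 2 * (?z * ?w)"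
      using Re_cnj_le[of "z x" "w x"] by linarith
    also have "\<dots> \<le> 2 * (?z * ((a + b * B\<^sup>2) * ?y))"
      using wb by (intro mult_left_mono) auto
    also have "\<dots> = (a + b * B\<^sup>2) * (2 * (?y * ?z))" by (simp add: algebra_simps)
    also have "\<dots> \<le> (a + b * B\<^sup>2) * (?y\<^sup>2 + ?z\<^sup>2)"
      using a b by (intro mult_left_mono two_ab_le) auto
    finally have 2: "2 * Re (cnj (z x) * w x) \<le> (a + b * B\<^sup>2) * (?y\<^sup>2 + ?z\<^sup>2)" .
    show ?thesis using 1 2 unfolding Q'_def Q_def C_def by (simp add: algebra_simps)
  qed
  have "R T \<le> R 0"
  proof (rule DERIV_nonpos_imp_nonincreasing[OF T])
    fix x assume x: "0 \<le> x" "x \<le> T"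
    have "exp (- C * x) * (Q' x - C * Q x) \<le> 0"
      using Qle[of x] x by (intro mult_nonneg_nonpos) auto
    then show "\<exists>d. (R has_real_derivative d) (at x) \<and> d \<le> 0" using dR[of x] x by blast
  qed
  moreover have "R 0 = 0" by (simp add: R_def Q_def y0 z0)
  ultimately have "Q T \<le> 0" unfolding R_def by (simp add: mult_le_0_iff)
  then have "(cmod (y T))\<^sup>2 \<le> 0" unfolding Q_def using zero_le_power2[of "cmod (z T)"] by linarith
  then show ?thesis by simp
qed


lemma locint_if:
  fixes fp fm :: "real \<Rightarrow> complex"
  assumes cp: "continuous_on UNIV fp" and cm: "continuous_on UNIV fm"
  shows "locint (\<lambda>x. if 0 \<le> x then fp x else fm x)"
  unfolding locint_def
proof (intro conjI allI)
  have [measurable]: "fp \<in> borel_measurable borel" "fm \<in> borel_measurable borel"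
    using cp cm by (auto intro: borel_measurable_continuous_onI)
  show "(\<lambda>x. if 0 \<le> x then fp x else fm x) \<in> borel_measurable borel" by measurable
  fix a b :: real
  have i: "integrable lborel (\<lambda>x. norm (indicator {a..b} x *\<^sub>R fp x) + norm (indicator {a..b} x *\<^sub>R fm x))"
    using cont_locint[OF cp] cont_locint[OF cm]
    by (intro Bochner_Integration.integrable_add integrable_norm) (auto simp: locint_def set_integrable_def)
  show "set_integrable lborel {a..b} (\<lambda>x. if 0 \<le> x then fp x else fm x)"
    unfolding set_integrable_def
  proof (rule Bochner_Integration.integrable_bound[OF i])
    show "(\<lambda>x. indicat_real {a..b} x *\<^sub>R (if 0 \<le> x then fp x else fm x)) \<in> borel_measurable lborel"
      by measurable
    show "AE x in lborel. norm (indicat_real {a..b} x *\<^sub>R (if 0 \<le> x then fp x else fm x))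
      \<le> norm (norm (indicat_real {a..b} x *\<^sub>R fp x) + norm (indicat_real {a..b} x *\<^sub>R fm x))"
      by (rule AE_I2) (auto simp: indicator_def)
  qed
qed

lemma small_zero:
  fixes a K :: real
  assumes K: "K > 0" and h: "\<And>\<epsilon>. 0 < \<epsilon> \<Longrightarrow> \<epsilon> \<le> 1 \<Longrightarrow> \<bar>a\<bar> \<le> K * \<epsilon>"
  shows "a = 0"
proof (rule ccontr)
  assume "a \<noteq> 0"
  define e where "e = min 1 (\<bar>a\<bar> / (2 * K))"
  have e: "0 < e" "e \<le> 1" using \<open>a \<noteq> 0\<close> K by (auto simp: e_def)
  have "K * e \<le> \<bar>a\<bar> / 2" using K unfolding e_def by (auto simp: min_def field_simps)
  then show False using h[OF e] \<open>a \<noteq> 0\<close> by simp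
qed

lemma energy_deriv:
  fixes u P :: "real \<Rightarrow> complex" and k G :: real
  assumes du: "(u has_vector_derivative P x) (at x)"
    and dP: "(P has_vector_derivative - (complex_of_real (k + G * (cmod (u x))\<^sup>2) * u x)) (at x)"
  shows "((\<lambda>x. (cmod (P x))\<^sup>2 + k * (cmod (u x))\<^sup>2 + G / 2 * ((cmod (u x))\<^sup>2)\<^sup>2) has_real_derivative 0) (at x)"
proof -
  have n1: "((\<lambda>x. (cmod (P x))\<^sup>2) has_real_derivative 2 * Re (cnj (P x) * - (complex_of_real (k + G * (cmod (u x))\<^sup>2) * u x))) (at x)"
    by (rule norm2_deriv[OF dP])
  have n2: "((\<lambda>x. (cmod (u x))\<^sup>2) has_real_derivative 2 * Re (cnj (u x) * P x)) (at x)"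
    by (rule norm2_deriv[OF du])
  have n3: "((\<lambda>x. ((cmod (u x))\<^sup>2)\<^sup>2) has_real_derivative 2 * (cmod (u x))\<^sup>2 * (2 * Re (cnj (u x) * P x))) (at x)"
    using DERIV_power[OF n2, of 2] by (simp add: algebra_simps)
  have "((\<lambda>x. (cmod (P x))\<^sup>2 + k * (cmod (u x))\<^sup>2 + G / 2 * ((cmod (u x))\<^sup>2)\<^sup>2) has_real_derivative
      2 * Re (cnj (P x) * - (complex_of_real (k + G * (cmod (u x))\<^sup>2) * u x))
      + k * (2 * Re (cnj (u x) * P x)) + G / 2 * (2 * (cmod (u x))\<^sup>2 * (2 * Re (cnj (u x) * P x)))) (at x)"
    by (intro DERIV_add DERIV_cmult n1 n2 n3)
  moreover have "2 * Re (cnj (P x) * - (complex_of_real (k + G * (cmod (u x))\<^sup>2) * u x))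
      + k * (2 * Re (cnj (u x) * P x)) + G / 2 * (2 * (cmod (u x))\<^sup>2 * (2 * Re (cnj (u x) * P x))) = 0"
    by (simp add: algebra_simps)
  ultimately show ?thesis by simp
qed


lemma step_coeff_meas[measurable]: "step_coeff Gp Gm \<in> borel_measurable borel"
  unfolding step_coeff_def by measurable

lemma LBINT_zero_same: "(LBINT s=0..0. f s) = (0::'a::euclidean_space)"
  by (simp add: interval_lebesgue_integral_def einterval_same set_lebesgue_integral_def)

lemma regularity:
  fixes \<phi> :: "real \<Rightarrow> complex"
  assumes H: "H1 \<phi>" and W: "weak_solution \<mu> (\<lambda>_. c) (step_coeff Gp Gm) \<phi>"
  shows "\<exists>u pp pm. continuous_on UNIV u \<and> (AE x in lborel. \<phi> x = u x)
     \<and> (\<forall>x. (u has_vector_derivative (if 0 \<le> x then pp x else pm x)) (at x))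
     \<and> (\<forall>x. (pp has_vector_derivative - (complex_of_real (\<mu> - c + Gp * (cmod (u x))\<^sup>2) * u x)) (at x))
     \<and> (\<forall>x. (pm has_vector_derivative - (complex_of_real (\<mu> - c + Gm * (cmod (u x))\<^sup>2) * u x)) (at x))
     \<and> pp 0 = pm 0
     \<and> integrable lborel (\<lambda>x. (cmod (u x))\<^sup>2 + (cmod (if 0 \<le> x then pp x else pm x))\<^sup>2)"
proof -
  obtain g where gL2: "L2 g" and wd: "weak_deriv \<phi> g" using H unfolding H1_def by blast
  have \<phi>L2: "L2 \<phi>" using H unfolding H1_def by blast
  have l\<phi>: "locint \<phi>" by (rule L2_locint[OF \<phi>L2])
  have lg: "locint g" by (rule L2_locint[OF gL2])
  have \<phi>m[measurable]: "\<phi> \<in> borel_measurable borel" using \<phi>L2 by (simp add: L2_def)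
  have gm[measurable]: "g \<in> borel_measurable borel" using gL2 by (simp add: L2_def)
  define U where "U = (\<lambda>x::real. LBINT s=0..x. g s)"
  have Uc: "continuous_on UNIV U" unfolding U_def by (rule indef_cont[OF lg])
  have "\<exists>C. AE x in lborel. \<phi> x - U x = C"
  proof (rule FL1)
    show "locint (\<lambda>x. \<phi> x - U x)" by (intro locint_diff l\<phi> cont_locint Uc)
    fix \<psi> assume t: "test_fun \<psi>"
    have wd\<psi>: "integral\<^sup>L lborel (\<lambda>x. \<phi> x * of_real (deriv \<psi> x)) = - integral\<^sup>L lborel (\<lambda>x. g x * of_real (\<psi> x))"
      using wd t unfolding weak_deriv_def by blast
    have ibp: "integral\<^sup>L lborel (\<lambda>x. U x * of_real (deriv \<psi> x)) = - integral\<^sup>L lborel (\<lambda>x. g x * of_real (\<psi> x))"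
      unfolding U_def by (rule IBP_AC[OF lg t])
    have i1: "integrable lborel (\<lambda>x. \<phi> x * of_real (deriv \<psi> x))"
      by (rule integrable_test_mult[OF l\<phi> test_fun_deriv[OF t]])
    have i2: "integrable lborel (\<lambda>x. U x * of_real (deriv \<psi> x))"
      by (rule integrable_test_mult[OF cont_locint[OF Uc] test_fun_deriv[OF t]])
    have "integral\<^sup>L lborel (\<lambda>x. (\<phi> x - U x) * of_real (deriv \<psi> x))
        = integral\<^sup>L lborel (\<lambda>x. \<phi> x * of_real (deriv \<psi> x) - U x * of_real (deriv \<psi> x))"
      by (simp add: algebra_simps)
    also have "\<dots> = integral\<^sup>L lborel (\<lambda>x. \<phi> x * of_real (deriv \<psi> x)) - integral\<^sup>L lborel (\<lambda>x. U x * of_real (deriv \<psi> x))"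
      using i1 i2 by (rule Bochner_Integration.integral_diff)
    finally show "integral\<^sup>L lborel (\<lambda>x. (\<phi> x - U x) * of_real (deriv \<psi> x)) = 0"
      using wd\<psi> ibp by simp
  qed
  then obtain C0 where C0: "AE x in lborel. \<phi> x - U x = C0" by blast
  define u where "u = (\<lambda>x. U x + C0)"
  have uc: "continuous_on UNIV u" unfolding u_def by (intro continuous_intros Uc)
  have um[measurable]: "u \<in> borel_measurable borel" by (rule borel_measurable_continuous_onI[OF uc])
  have AEu: "AE x in lborel. \<phi> x = u x"
    using C0 by eventually_elim (simp add: u_def algebra_simps)
  define k where "k = \<mu> - c"
  define fp where "fp = (\<lambda>x. complex_of_real (k + Gp * (cmod (u x))\<^sup>2) * u x)"
  define fm where "fm = (\<lambda>x. complex_of_real (k + Gm * (cmod (u x))\<^sup>2) * u x)"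
  define fG where "fG = (\<lambda>x. if 0 \<le> x then fp x else fm x)"
  have fpc: "continuous_on UNIV fp" unfolding fp_def by (intro continuous_intros uc)
  have fmc: "continuous_on UNIV fm" unfolding fm_def by (intro continuous_intros uc)
  have lfG: "locint fG" unfolding fG_def by (rule locint_if[OF fpc fmc])
  have fGm[measurable]: "fG \<in> borel_measurable borel" using lfG by (simp add: locint_def)
  have fG_eq: "complex_of_real (\<mu> - c + step_coeff Gp Gm x * (cmod (u x))\<^sup>2) * u x = fG x" for x
    by (simp add: step_coeff_def fG_def fp_def fm_def k_def)
  have key: "integral\<^sup>L lborel (\<lambda>x. g x * of_real (deriv \<psi> x)) = integral\<^sup>L lborel (\<lambda>x. fG x * of_real (\<psi> x))"
    if t: "test_fun \<psi>" for \<psi>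
  proof -
    have t1: "test_fun (deriv \<psi>)" by (rule test_fun_deriv[OF t])
    have t2: "test_fun (deriv (deriv \<psi>))" by (rule test_fun_deriv[OF t1])
    have [measurable]: "\<psi> \<in> borel_measurable borel" "deriv \<psi> \<in> borel_measurable borel"
      "deriv (deriv \<psi>) \<in> borel_measurable borel"
      using t t1 t2 by (auto intro!: borel_measurable_continuous_onI test_cont)
    have ws: "integral\<^sup>L lborel (\<lambda>x. \<phi> x * complex_of_real (deriv (deriv \<psi>) x)
          + complex_of_real (\<mu> - c + step_coeff Gp Gm x * (norm (\<phi> x))\<^sup>2) * \<phi> x * complex_of_real (\<psi> x)) = 0"
      using W t unfolding weak_solution_def by blast
    have "integral\<^sup>L lborel (\<lambda>x. \<phi> x * complex_of_real (deriv (deriv \<psi>) x)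
          + complex_of_real (\<mu> - c + step_coeff Gp Gm x * (norm (\<phi> x))\<^sup>2) * \<phi> x * complex_of_real (\<psi> x))
        = integral\<^sup>L lborel (\<lambda>x. u x * complex_of_real (deriv (deriv \<psi>) x) + fG x * complex_of_real (\<psi> x))"
    proof (rule integral_cong_AE)
      show "AE x in lborel. \<phi> x * complex_of_real (deriv (deriv \<psi>) x)
          + complex_of_real (\<mu> - c + step_coeff Gp Gm x * (norm (\<phi> x))\<^sup>2) * \<phi> x * complex_of_real (\<psi> x)
          = u x * complex_of_real (deriv (deriv \<psi>) x) + fG x * complex_of_real (\<psi> x)"
        using AEu
      proof eventually_elim
        case (elim x)
        then show ?case using fG_eq[of x] by simp
      qed
    qed measurable
    also have "\<dots> = integral\<^sup>L lborel (\<lambda>x. u x * complex_of_real (deriv (deriv \<psi>) x)) + integral\<^sup>L lborel (\<lambda>x. fG x * complex_of_real (\<psi> x))"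
      by (rule Bochner_Integration.integral_add[OF integrable_test_mult[OF cont_locint[OF uc] t2] integrable_test_mult[OF lfG t]])
    finally have e1: "integral\<^sup>L lborel (\<lambda>x. u x * complex_of_real (deriv (deriv \<psi>) x)) = - integral\<^sup>L lborel (\<lambda>x. fG x * complex_of_real (\<psi> x))"
      using ws by (simp add: eq_neg_iff_add_eq_0)
    have e2: "integral\<^sup>L lborel (\<lambda>x. \<phi> x * of_real (deriv (deriv \<psi>) x)) = - integral\<^sup>L lborel (\<lambda>x. g x * of_real (deriv \<psi> x))"
      using wd t1 unfolding weak_deriv_def by blast
    have e3: "integral\<^sup>L lborel (\<lambda>x. \<phi> x * of_real (deriv (deriv \<psi>) x)) = integral\<^sup>L lborel (\<lambda>x. u x * of_real (deriv (deriv \<psi>) x))"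
    proof (rule integral_cong_AE)
      show "AE x in lborel. \<phi> x * complex_of_real (deriv (deriv \<psi>) x) = u x * complex_of_real (deriv (deriv \<psi>) x)"
        using AEu by eventually_elim simp
    qed measurable
    show ?thesis using e1 e2 e3 by simp
  qed

  define F where "F = (\<lambda>x::real. LBINT s=0..x. fG s)"
  have Fc: "continuous_on UNIV F" unfolding F_def by (rule indef_cont[OF lfG])
  have "\<exists>D. AE x in lborel. g x + F x = D"
  proof (rule FL1)
    show "locint (\<lambda>x. g x + F x)" by (intro locint_add lg cont_locint Fc)
    fix \<psi> assume t: "test_fun \<psi>"
    have ibp: "integral\<^sup>L lborel (\<lambda>x. F x * of_real (deriv \<psi> x)) = - integral\<^sup>L lborel (\<lambda>x. fG x * of_real (\<psi> x))"
      unfolding F_def by (rule IBP_AC[OF lfG t])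
    have i1: "integrable lborel (\<lambda>x. g x * of_real (deriv \<psi> x))"
      by (rule integrable_test_mult[OF lg test_fun_deriv[OF t]])
    have i2: "integrable lborel (\<lambda>x. F x * of_real (deriv \<psi> x))"
      by (rule integrable_test_mult[OF cont_locint[OF Fc] test_fun_deriv[OF t]])
    have "integral\<^sup>L lborel (\<lambda>x. (g x + F x) * of_real (deriv \<psi> x))
        = integral\<^sup>L lborel (\<lambda>x. g x * of_real (deriv \<psi> x) + F x * of_real (deriv \<psi> x))"
      by (simp add: algebra_simps)
    also have "\<dots> = integral\<^sup>L lborel (\<lambda>x. g x * of_real (deriv \<psi> x)) + integral\<^sup>L lborel (\<lambda>x. F x * of_real (deriv \<psi> x))"
      using i1 i2 by (rule Bochner_Integration.integral_add)
    finally show "integral\<^sup>L lborel (\<lambda>x. (g x + F x) * of_real (deriv \<psi> x)) = 0"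
      using key[OF t] ibp by simp
  qed
  then obtain D0 where D0: "AE x in lborel. g x + F x = D0" by blast
  define p where "p = (\<lambda>x. D0 - F x)"
  have pc: "continuous_on UNIV p" unfolding p_def by (intro continuous_intros Fc)
  have pm[measurable]: "p \<in> borel_measurable borel" by (rule borel_measurable_continuous_onI[OF pc])
  have AEgp: "AE x in lborel. g x = p x"
    using D0 by eventually_elim (simp add: p_def algebra_simps)
  have Up: "U x = (LBINT s=0..x. p s)" for x
    unfolding U_def
  proof (rule interval_integral_cong_AE)
    show "AE y \<in> einterval (min 0 (ereal x)) (max 0 (ereal x)) in lborel. g y = p y"
      using AEgp by eventually_elim simp
  qed measurable
  have du: "(u has_vector_derivative p x) (at x)" for x
  proof -
    have "((\<lambda>x::real. LBINT s=0..x. p s) has_vector_derivative p x) (at x)"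
      using antideriv_LBINT[OF pc, of 0 x] by (simp add: zero_ereal_def)
    then have "((\<lambda>x. (LBINT s=0..x. p s) + C0) has_vector_derivative p x + 0) (at x)"
      by (intro has_vector_derivative_add has_vector_derivative_const)
    moreover have "(\<lambda>x. (LBINT s=0..x. p s) + C0) = u" by (auto simp: u_def Up)
    ultimately show ?thesis by simp
  qed
  define Fp where "Fp = (\<lambda>x::real. LBINT s=0..x. fp s)"
  define Fm where "Fm = (\<lambda>x::real. LBINT s=0..x. fm s)"
  define pp where "pp = (\<lambda>x. D0 - Fp x)"
  define pmi where "pmi = (\<lambda>x. D0 - Fm x)"
  have FFp: "F x = Fp x" if "0 \<le> x" for x
    unfolding F_def Fp_def
  proof (rule interval_integral_cong)
    fix y assume y: "y \<in> einterval (min 0 (ereal x)) (max 0 (ereal x))"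
    have "min 0 (ereal x) = 0" using that by simp
    then have "0 < y" using y by (simp add: einterval_iff)
    then show "fG y = fp y" by (simp add: fG_def)
  qed
  have FFm: "F x = Fm x" if "x \<le> 0" for x
    unfolding F_def Fm_def
  proof (rule interval_integral_cong)
    fix y assume y: "y \<in> einterval (min 0 (ereal x)) (max 0 (ereal x))"
    have "max 0 (ereal x) = 0" using that by simp
    then have "y < 0" using y by (simp add: einterval_iff)
    then show "fG y = fm y" by (simp add: fG_def)
  qed
  have p_eq: "p x = (if 0 \<le> x then pp x else pmi x)" for x
    using FFp[of x] FFm[of x] by (simp add: p_def pp_def pmi_def)
  have dpp: "(pp has_vector_derivative - fp x) (at x)" for x
    unfolding pp_def Fp_def
    using has_vector_derivative_diff[OF has_vector_derivative_const[of D0] antideriv_LBINT[OF fpc, of 0 x]] by (simp add: zero_ereal_def)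
  have dpm: "(pmi has_vector_derivative - fm x) (at x)" for x
    unfolding pmi_def Fm_def
    using has_vector_derivative_diff[OF has_vector_derivative_const[of D0] antideriv_LBINT[OF fmc, of 0 x]] by (simp add: zero_ereal_def)
  have pp0: "pp 0 = pmi 0" unfolding pp_def pmi_def Fp_def Fm_def zero_ereal_def[symmetric] by (simp add: LBINT_zero_same)
  have int: "integrable lborel (\<lambda>x. (cmod (u x))\<^sup>2 + (cmod (p x))\<^sup>2)"
  proof -
    have "integrable lborel (\<lambda>x. (cmod (\<phi> x))\<^sup>2 + (cmod (g x))\<^sup>2)"
      using \<phi>L2 gL2 by (intro Bochner_Integration.integrable_add) (auto simp: L2_def)
    then show ?thesis
    proof (rule integrable_cong_AE_imp)
      show "(\<lambda>x. (cmod (u x))\<^sup>2 + (cmod (p x))\<^sup>2) \<in> borel_measurable lborel" by measurable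
      show "AE x in lborel. (cmod (\<phi> x))\<^sup>2 + (cmod (g x))\<^sup>2 = (cmod (u x))\<^sup>2 + (cmod (p x))\<^sup>2"
        using AEu AEgp by eventually_elim simp
    qed
  qed
  show ?thesis
  proof (intro exI conjI allI)
    show "continuous_on UNIV u" by (rule uc)
    show "AE x in lborel. \<phi> x = u x" by (rule AEu)
    fix x
    show "(u has_vector_derivative (if 0 \<le> x then pp x else pmi x)) (at x)" using du[of x] p_eq[of x] by simp
  next
    fix x
    show "(pp has_vector_derivative - (complex_of_real (\<mu> - c + Gp * (cmod (u x))\<^sup>2) * u x)) (at x)"
      using dpp[of x] by (simp add: fp_def k_def)
  next
    fix x
    show "(pmi has_vector_derivative - (complex_of_real (\<mu> - c + Gm * (cmod (u x))\<^sup>2) * u x)) (at x)"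
      using dpm[of x] by (simp add: fm_def k_def)
  next
    show "pp 0 = pmi 0" by (rule pp0)
    show "integrable lborel (\<lambda>x. (cmod (u x))\<^sup>2 + (cmod (if 0 \<le> x then pp x else pmi x))\<^sup>2)"
      using int by (simp add: p_eq[symmetric])
  qed
qed


lemma energy_small:
  fixes pv uv :: complex and k G \<epsilon> :: real
  assumes h: "(cmod uv)\<^sup>2 + (cmod pv)\<^sup>2 < \<epsilon>" and e1: "\<epsilon> \<le> 1"
  shows "\<bar>(cmod pv)\<^sup>2 + k * (cmod uv)\<^sup>2 + G / 2 * ((cmod uv)\<^sup>2)\<^sup>2\<bar> \<le> (1 + \<bar>k\<bar> + \<bar>G\<bar>) * \<epsilon>"
proof -
  define N where "N = (cmod uv)\<^sup>2"
  define Pn where "Pn = (cmod pv)\<^sup>2"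
  have N0: "0 \<le> N" and P0: "0 \<le> Pn" by (simp_all add: N_def Pn_def)
  have Ne: "N \<le> \<epsilon>" and Pe: "Pn \<le> \<epsilon>" using h N0 P0 unfolding N_def Pn_def by linarith+
  have N1: "N \<le> 1" using Ne e1 by linarith
  have "N\<^sup>2 \<le> N" using N0 N1 by (simp add: power2_eq_square mult_left_le)
  then have NN: "N\<^sup>2 \<le> \<epsilon>" using Ne by linarith
  have "\<bar>Pn + k * N + G / 2 * N\<^sup>2\<bar> \<le> Pn + \<bar>k\<bar> * N + \<bar>G\<bar> / 2 * N\<^sup>2"
    using N0 P0 by (simp add: abs_mult abs_triangle_ineq order_trans[OF abs_triangle_ineq] add_mono)
  also have "\<dots> \<le> \<epsilon> + \<bar>k\<bar> * \<epsilon> + \<bar>G\<bar> * \<epsilon>"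
  proof -
    have "\<bar>k\<bar> * N \<le> \<bar>k\<bar> * \<epsilon>" using Ne by (intro mult_left_mono) auto
    moreover have "\<bar>G\<bar> / 2 * N\<^sup>2 \<le> \<bar>G\<bar> * \<epsilon>"
    proof -
      have "\<bar>G\<bar> / 2 * N\<^sup>2 \<le> \<bar>G\<bar> * N\<^sup>2" using zero_le_power2[of N] by (simp add: mult_right_mono)
      also have "\<dots> \<le> \<bar>G\<bar> * \<epsilon>" using NN by (intro mult_left_mono) auto
      finally show ?thesis .
    qed
    ultimately show ?thesis using Pe by linarith
  qed
  finally show ?thesis by (simp add: N_def Pn_def algebra_simps)
qed


theorem lemma1p1:
  fixes \<mu> c Gp Gm :: real and \<phi> :: "real \<Rightarrow> complex"
  assumes "Gp \<noteq> Gm"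
    and "H1 \<phi>"
    and "weak_solution \<mu> (\<lambda>_. c) (step_coeff Gp Gm) \<phi>"
  shows "AE x in lborel. \<phi> x = 0"
proof -
  obtain u pp pm where uc: "continuous_on UNIV u" and AEu: "AE x in lborel. \<phi> x = u x"
    and du: "\<And>x. (u has_vector_derivative (if 0 \<le> x then pp x else pm x)) (at x)"
    and dpp: "\<And>x. (pp has_vector_derivative - (complex_of_real (\<mu> - c + Gp * (cmod (u x))\<^sup>2) * u x)) (at x)"
    and dpm: "\<And>x. (pm has_vector_derivative - (complex_of_real (\<mu> - c + Gm * (cmod (u x))\<^sup>2) * u x)) (at x)"
    and pp0: "pp 0 = pm 0"
    and int: "integrable lborel (\<lambda>x. (cmod (u x))\<^sup>2 + (cmod (if 0 \<le> x then pp x else pm x))\<^sup>2)"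
    using regularity[OF assms(2,3)] by blast
  define k where "k = \<mu> - c"
  define Ep where "Ep = (\<lambda>x. (cmod (pp x))\<^sup>2 + k * (cmod (u x))\<^sup>2 + Gp / 2 * ((cmod (u x))\<^sup>2)\<^sup>2)"
  define Em where "Em = (\<lambda>x. (cmod (pm x))\<^sup>2 + k * (cmod (u x))\<^sup>2 + Gm / 2 * ((cmod (u x))\<^sup>2)\<^sup>2)"
  have dEp: "(Ep has_real_derivative 0) (at x)" if "0 \<le> x" for x
    unfolding Ep_def
    by (rule energy_deriv) (use du[of x] dpp[of x] that in \<open>simp_all add: k_def\<close>)
  have dEm: "(Em has_real_derivative 0) (at x)" if "x \<le> 0" for x
  proof -
    have "pm x = (if 0 \<le> x then pp x else pm x)" using that pp0 by (cases "x = 0") auto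
    then show ?thesis
      unfolding Em_def
      by (intro energy_deriv) (use du[of x] dpm[of x] in \<open>simp_all add: k_def\<close>)
  qed
  have Ep_const: "Ep x = Ep 0" if "0 \<le> x" for x
  proof (cases "x = 0")
    case False
    then have "0 < x" using that by simp
    then show ?thesis
    proof (rule DERIV_isconst_end)
      show "continuous_on {0..x} Ep"
        by (intro continuous_at_imp_continuous_on ballI DERIV_isCont[OF dEp]) auto
    qed (use dEp in auto)
  qed simp
  have Em_const: "Em x = Em 0" if "x \<le> 0" for x
  proof (cases "x = 0")
    case False
    then have "x < 0" using that by simp
    then have "Em 0 = Em x"
    proof (rule DERIV_isconst_end)
      show "continuous_on {x..0} Em"
        by (intro continuous_at_imp_continuous_on ballI DERIV_isCont[OF dEm]) auto
    qed (use dEm in auto)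
    then show ?thesis by simp
  qed simp
  define h where "h = (\<lambda>x. (cmod (u x))\<^sup>2 + (cmod (if 0 \<le> x then pp x else pm x))\<^sup>2)"
  have h0: "\<And>x. h x \<ge> 0" by (simp add: h_def)
  have hi: "integrable lborel h" using int by (simp add: h_def)
  have Kpos: "1 + \<bar>k\<bar> + \<bar>Gp\<bar> > 0" "1 + \<bar>k\<bar> + \<bar>Gm\<bar> > 0" by auto
  have Ep0: "Ep 0 = 0"
  proof (rule small_zero[OF Kpos(1)])
    fix \<epsilon> :: real assume e: "0 < \<epsilon>" "\<epsilon> \<le> 1"
    obtain x where x: "x \<ge> 0" "h x < \<epsilon>" using exists_small[OF hi h0 e(1), of 0] by blast
    have "\<bar>Ep x\<bar> \<le> (1 + \<bar>k\<bar> + \<bar>Gp\<bar>) * \<epsilon>"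
      unfolding Ep_def by (rule energy_small) (use x e in \<open>simp_all add: h_def\<close>)
    then show "\<bar>Ep 0\<bar> \<le> (1 + \<bar>k\<bar> + \<bar>Gp\<bar>) * \<epsilon>" using Ep_const[OF x(1)] by simp
  qed
  have Em0: "Em 0 = 0"
  proof (rule small_zero[OF Kpos(2)])
    fix \<epsilon> :: real assume e: "0 < \<epsilon>" "\<epsilon> \<le> 1"
    obtain x where x: "x \<le> 0" "h x < \<epsilon>" using exists_small_neg[OF hi h0 e(1), of 0] by blast
    have hx: "(cmod (u x))\<^sup>2 + (cmod (pm x))\<^sup>2 < \<epsilon>"
    proof -
      have "pm x = (if 0 \<le> x then pp x else pm x)" using x(1) pp0 by (cases "x = 0") auto
      then show ?thesis using x(2) by (simp add: h_def)
    qed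
    have "\<bar>Em x\<bar> \<le> (1 + \<bar>k\<bar> + \<bar>Gm\<bar>) * \<epsilon>"
      unfolding Em_def by (rule energy_small[OF hx e(2)])
    then show "\<bar>Em 0\<bar> \<le> (1 + \<bar>k\<bar> + \<bar>Gm\<bar>) * \<epsilon>" using Em_const[OF x(1)] by simp
  qed
  have "Ep 0 - Em 0 = (Gp - Gm) / 2 * ((cmod (u 0))\<^sup>2)\<^sup>2"
    by (simp add: Ep_def Em_def pp0 algebra_simps)
  then have "(Gp - Gm) / 2 * ((cmod (u 0))\<^sup>2)\<^sup>2 = 0" using Ep0 Em0 by simp
  then have u0: "u 0 = 0" using assms(1) by simp
  then have "(cmod (pp 0))\<^sup>2 = 0" using Ep0 by (simp add: Ep_def)
  then have ppz: "pp 0 = 0" by simp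
  then have pmz: "pm 0 = 0" using pp0 by simp
  have right: "u T = 0" if "0 \<le> T" for T
  proof (rule ode_unique[of u pp "\<lambda>x. - (complex_of_real (\<mu> - c + Gp * (cmod (u x))\<^sup>2) * u x)" "\<bar>\<mu> - c\<bar>" "\<bar>Gp\<bar>"])
    fix x :: real assume x: "0 \<le> x"
    show "(u has_vector_derivative pp x) (at x)" using du[of x] x by simp
    show "(pp has_vector_derivative - (complex_of_real (\<mu> - c + Gp * (cmod (u x))\<^sup>2) * u x)) (at x)"
      by (rule dpp)
    have "\<bar>\<mu> - c + Gp * (cmod (u x))\<^sup>2\<bar> \<le> \<bar>\<mu> - c\<bar> + \<bar>Gp\<bar> * (cmod (u x))\<^sup>2"
      by (metis abs_mult abs_power2 abs_triangle_ineq power2_abs)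
    then show "cmod (- (complex_of_real (\<mu> - c + Gp * (cmod (u x))\<^sup>2) * u x)) \<le> (\<bar>\<mu> - c\<bar> + \<bar>Gp\<bar> * (cmod (u x))\<^sup>2) * cmod (u x)"
    proof -
      assume A: "\<bar>\<mu> - c + Gp * (cmod (u x))\<^sup>2\<bar> \<le> \<bar>\<mu> - c\<bar> + \<bar>Gp\<bar> * (cmod (u x))\<^sup>2"
      have "cmod (- (complex_of_real (\<mu> - c + Gp * (cmod (u x))\<^sup>2) * u x)) = \<bar>\<mu> - c + Gp * (cmod (u x))\<^sup>2\<bar> * cmod (u x)"
        by (simp only: norm_minus_cancel norm_mult norm_of_real)
      also have "\<dots> \<le> (\<bar>\<mu> - c\<bar> + \<bar>Gp\<bar> * (cmod (u x))\<^sup>2) * cmod (u x)"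
        using A by (rule mult_right_mono) simp
      finally show ?thesis .
    qed
  qed (use u0 ppz that in auto)
  have left: "u (- T) = 0" if "0 \<le> T" for T
  proof (rule ode_unique[of "\<lambda>x. u (- x)" "\<lambda>x. - pm (- x)" "\<lambda>x. - (complex_of_real (\<mu> - c + Gm * (cmod (u (- x)))\<^sup>2) * u (- x))" "\<bar>\<mu> - c\<bar>" "\<bar>Gm\<bar>"])
    fix x :: real assume x: "0 \<le> x"
    have neg: "((\<lambda>x::real. - x) has_vector_derivative -1) (at x)"
      by (auto intro!: derivative_eq_intros)
    have pmx: "pm (- x) = (if 0 \<le> - x then pp (- x) else pm (- x))" using x pp0 by (cases "x = 0") auto
    have "((u \<circ> (\<lambda>x. - x)) has_vector_derivative (-1) *\<^sub>R pm (- x)) (at x)"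
      by (rule vector_diff_chain_at[OF neg]) (use du[of "- x"] pmx in simp)
    then show "((\<lambda>x. u (- x)) has_vector_derivative - pm (- x)) (at x)" by (simp add: o_def)
    have "((pm \<circ> (\<lambda>x. - x)) has_vector_derivative (-1) *\<^sub>R (- (complex_of_real (\<mu> - c + Gm * (cmod (u (- x)))\<^sup>2) * u (- x)))) (at x)"
      by (rule vector_diff_chain_at[OF neg]) (use dpm[of "- x"] in simp)
    then have "((\<lambda>x. - pm (- x)) has_vector_derivative - ((-1) *\<^sub>R (- (complex_of_real (\<mu> - c + Gm * (cmod (u (- x)))\<^sup>2) * u (- x))))) (at x)"
      by (intro has_vector_derivative_minus) (simp add: o_def)
    then show "((\<lambda>x. - pm (- x)) has_vector_derivative - (complex_of_real (\<mu> - c + Gm * (cmod (u (- x)))\<^sup>2) * u (- x))) (at x)"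
      by simp
    have "\<bar>\<mu> - c + Gm * (cmod (u (- x)))\<^sup>2\<bar> \<le> \<bar>\<mu> - c\<bar> + \<bar>Gm\<bar> * (cmod (u (- x)))\<^sup>2"
      by (metis abs_mult abs_power2 abs_triangle_ineq power2_abs)
    then show "cmod (- (complex_of_real (\<mu> - c + Gm * (cmod (u (- x)))\<^sup>2) * u (- x))) \<le> (\<bar>\<mu> - c\<bar> + \<bar>Gm\<bar> * (cmod (u (- x)))\<^sup>2) * cmod (u (- x))"
    proof -
      assume A: "\<bar>\<mu> - c + Gm * (cmod (u (- x)))\<^sup>2\<bar> \<le> \<bar>\<mu> - c\<bar> + \<bar>Gm\<bar> * (cmod (u (- x)))\<^sup>2"
      have "cmod (- (complex_of_real (\<mu> - c + Gm * (cmod (u (- x)))\<^sup>2) * u (- x))) = \<bar>\<mu> - c + Gm * (cmod (u (- x)))\<^sup>2\<bar> * cmod (u (- x))"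
        by (simp only: norm_minus_cancel norm_mult norm_of_real)
      also have "\<dots> \<le> (\<bar>\<mu> - c\<bar> + \<bar>Gm\<bar> * (cmod (u (- x)))\<^sup>2) * cmod (u (- x))"
        using A by (rule mult_right_mono) simp
      finally show ?thesis .
    qed
  qed (use u0 pmz that in auto)
  have uz: "u x = 0" for x
  proof (cases "0 \<le> x")
    case True then show ?thesis by (rule right)
  next
    case False then show ?thesis using left[of "- x"] by simp
  qed
  show ?thesis using AEu by eventually_elim (simp add: uz)
qed


end
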